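(* Let $f(r)=r$ and $q_0=(x_0,y_0,z_0)$ with $r_0=\sqrt{x_0^2+y_0^2}>0$. Let $\gamma$ be a unit-speed normal trajectory from $q_0$ with initial covector $\lambda_0=(u_0,v_0,w_0)$ satisfying $K=x_0v_0-y_0u_0>0$, $w_0>0$ and $L=x_0u_0+y_0v_0>0$. Write $\gamma$ in cylindrical coordinates as $(r(t),\theta(t),z(t))$. Then $r(t)$ oscillates between values $0<r_{\min}<r_0<r_{\max}$ determined by $$w_0=\frac1{\sqrt{r_{\min}^2+r_{\max}^2}},\qquad K=\frac{r_{\min}r_{\max}}{\sqrt{r_{\min}^2+r_{\max}^2}}.$$ The map $(r_{\min},r_{\max})\in(0,r_0)\times(r_0,\infty)$ is a coordinate chart on the part of $E_1$ where $K,L,w_0>0$. In these coordinates, with $s=w_0t+\phi$, $$r(t)^2=r_{\min}^2+(r_{\max}^2-r_{\min}^2)\sin^2 s,$$ where $\phi\in(0,\pi/2)$ is defined by $r_0^2=r_{\min}^2+(r_{\max}^2-r_{\min}^2)\sin^2\phi$. The Jacobian $D(t,r_{\min},r_{\max}):=\dfrac{\partial(r,\theta)}{\partial(r_{\min},r_{\max})}=r_{r_{\min}}\theta_{r_{\max}}-r_{r_{\max}}\theta_{r_{\min}}$ equals $$D=\frac1{r(t)}\Big[w_0^3t\big((\cot\phi\,r_{\max}^2-\tan\phi\,r_{\min}^2)\sin s\cos s+r_{\min}^2\sin^2s-r_{\max}^2\cos^2s\big)+2\sin s\cos s-\tan\phi\cos^2s-\cot\phi\sin^2s\Big].$$ Its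 first positive zero in $t$ is exactly $t=\pi/w_0$, and $t_{\mathrm{con}}(\gamma)=\pi/w_0$.
   Context: Consider $\mathbb R^3$ with points $q=(x,y,z)$, $r=\sqrt{x^2+y^2}$, and the function $f(r)=r$. Normal trajectories are projections of solutions of $$\dot x=u,\quad \dot y=v,\quad \dot z=r^2w,\quad \dot u=-w^2x,\quad \dot v=-w^2y,\quad \dot w=0,$$ with initial covector $\lambda_0=(u_0,v_0,w_0)$. They are unit speed when $\lambda_0\in E_1=\{u_0^2+v_0^2+r_0^2w_0^2=1\}$. Exponential map and conjugate time: - $\mathrm{Exp}_{q_0}(\lambda_0)=\gamma(1;\lambda_0)$. - $t_{\mathrm{con}}(\gamma)=\inf\{t>0:\mathrm{Exp}_{q_0}\text{ has a critical point at }t\lambda_0\}$. *)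

theory Defs
  imports "HOL-Analysis.Analysis"
begin

definition cyl_r :: "real * real * real \<Rightarrow> real" where
  "cyl_r q = (case q of (x, y, z) \<Rightarrow> sqrt (x^2 + y^2))"

definition normal_lift ::
  "real * real * real \<Rightarrow> real * real * real \<Rightarrow> (real \<Rightarrow> real * real * real)
   \<Rightarrow> (real \<Rightarrow> real * real * real) \<Rightarrow> bool" where
  "normal_lift q0 l0 q l \<longleftrightarrow> q 0 = q0 \<and> l 0 = l0 \<and>
     (\<forall>t. (q has_vector_derivative
              (case q t of (x, y, z) \<Rightarrow> case l t of (u, v, w) \<Rightarrow> (u, v, (x^2 + y^2) * w))) (at t)
        \<and> (l has_vector_derivative
              (case q t of (x, y, z) \<Rightarrow> case l t of (u, v, w) \<Rightarrow> (- (w^2) * x, - (w^2) * y, 0))) (at t))"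

definition normal_traj :: "real * real * real \<Rightarrow> real * real * real \<Rightarrow> real \<Rightarrow> real * real * real" where
  "normal_traj q0 l0 = (THE q. \<exists>l. normal_lift q0 l0 q l)"

definition Exp :: "real * real * real \<Rightarrow> real * real * real \<Rightarrow> real * real * real" where
  "Exp q0 l0 = normal_traj q0 l0 1"

definition exp_critical :: "real * real * real \<Rightarrow> real * real * real \<Rightarrow> bool" where
  "exp_critical q0 p \<longleftrightarrow> (\<exists>L. (Exp q0 has_derivative L) (at p) \<and> \<not> surj L)"

definition t_con :: "real * real * real \<Rightarrow> real * real * real \<Rightarrow> real" where
  "t_con q0 l0 = Inf {t. t > 0 \<and> exp_critical q0 (t *\<^sub>R l0)}"

definition E1 :: "real * real * real \<Rightarrow> (real * real * real) set" where
  "E1 q0 = {l. case l of (u, v, w) \<Rightarrow> u^2 + v^2 + (cyl_r q0)^2 * w^2 = 1}"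

definition Kof :: "real * real * real \<Rightarrow> real * real * real \<Rightarrow> real" where
  "Kof q0 l = (case q0 of (x0, y0, z0) \<Rightarrow> case l of (u0, v0, w0) \<Rightarrow> x0 * v0 - y0 * u0)"

definition Lof :: "real * real * real \<Rightarrow> real * real * real \<Rightarrow> real" where
  "Lof q0 l = (case q0 of (x0, y0, z0) \<Rightarrow> case l of (u0, v0, w0) \<Rightarrow> x0 * u0 + y0 * v0)"

definition wof :: "real * real * real \<Rightarrow> real" where
  "wof l = snd (snd l)"

definition rmin :: "real * real * real \<Rightarrow> real * real * real \<Rightarrow> real" where
  "rmin q0 l0 = Inf (range (\<lambda>t. cyl_r (normal_traj q0 l0 t)))"

definition rmax :: "real * real * real \<Rightarrow> real * real * real \<Rightarrow> real" where
  "rmax q0 l0 = Sup (range (\<lambda>t. cyl_r (normal_traj q0 l0 t)))"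

definition phase :: "real \<Rightarrow> real \<Rightarrow> real \<Rightarrow> real" where
  "phase r0 a b = (THE \<phi>. 0 < \<phi> \<and> \<phi> < pi / 2 \<and> r0^2 = a^2 + (b^2 - a^2) * (sin \<phi>)^2)"

definition Dexpr :: "real \<Rightarrow> real \<Rightarrow> real \<Rightarrow> real \<Rightarrow> real \<Rightarrow> real" where
  "Dexpr r0 a b t r =
     (let w0 = 1 / sqrt (a^2 + b^2); \<phi> = phase r0 a b; s = w0 * t + \<phi> in
      (1 / r) * (w0^3 * t * ((cot \<phi> * b^2 - tan \<phi> * a^2) * sin s * cos s
                              + a^2 * (sin s)^2 - b^2 * (cos s)^2)
                 + 2 * sin s * cos s - tan \<phi> * (cos s)^2 - cot \<phi> * (sin s)^2))"

definition angle_lift ::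
  "real * real * real \<Rightarrow> (real * real \<Rightarrow> real * real * real) \<Rightarrow> (real * real) set
   \<Rightarrow> (real \<Rightarrow> real \<Rightarrow> real \<Rightarrow> real) \<Rightarrow> bool" where
  "angle_lift q0 \<Psi> A \<Theta> \<longleftrightarrow>
     continuous_on (UNIV \<times> A) (\<lambda>(t, p). \<Theta> t (fst p) (snd p)) \<and>
     (\<forall>t. \<forall>p\<in>A. case normal_traj q0 (\<Psi> p) t of (x, y, z) \<Rightarrow>
          x = cyl_r (normal_traj q0 (\<Psi> p) t) * cos (\<Theta> t (fst p) (snd p)) \<and>
          y = cyl_r (normal_traj q0 (\<Psi> p) t) * sin (\<Theta> t (fst p) (snd p)))"

end

theory Submission
  imports Defs
begin

lemma comp_deriv:
  assumes "(f has_vector_derivative (a,b,c)) (at t)"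
  shows "((\<lambda>t. fst (f t)) has_real_derivative a) (at t)"
    "((\<lambda>t. fst (snd (f t))) has_real_derivative b) (at t)"
    "((\<lambda>t. snd (snd (f t))) has_real_derivative c) (at t)"
proof -
  have 1: "((\<lambda>t. fst (f t)) has_vector_derivative a) (at t)"
    using bounded_linear.has_vector_derivative[OF bounded_linear_fst assms] by simp
  have 2: "((\<lambda>t. snd (f t)) has_vector_derivative (b,c)) (at t)"
    using bounded_linear.has_vector_derivative[OF bounded_linear_snd assms] by simp
  have 3: "((\<lambda>t. fst (snd (f t))) has_vector_derivative b) (at t)"
    using bounded_linear.has_vector_derivative[OF bounded_linear_fst 2] by simp
  have 4: "((\<lambda>t. snd (snd (f t))) has_vector_derivative c) (at t)"
    using bounded_linear.has_vector_derivative[OF bounded_linear_snd 2] by simp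
  show "((\<lambda>t. fst (f t)) has_real_derivative a) (at t)"
    "((\<lambda>t. fst (snd (f t))) has_real_derivative b) (at t)"
    "((\<lambda>t. snd (snd (f t))) has_real_derivative c) (at t)"
    using 1 3 4 by (simp_all add: has_real_derivative_iff_has_vector_derivative)
qed

locale ctx =
  fixes x0 y0 z0 :: real
  assumes pos: "x0^2 + y0^2 > 0"
begin

definition "rr = x0^2 + y0^2"

definition "Xf u w t = x0 * cos (w*t) + u * sin (w*t) / w"
definition "Yf v w t = y0 * cos (w*t) + v * sin (w*t) / w"
definition "Uf u w t = u * cos (w*t) - x0 * w * sin (w*t)"
definition "Vf v w t = v * cos (w*t) - y0 * w * sin (w*t)"
definition "Zf u v w t = z0 + rr*(w*t + sin(w*t)*cos(w*t))/2
   + (u^2+v^2)*(w*t - sin(w*t)*cos(w*t))/(2*w^2) + (x0*u + y0 * v) * (sin (w*t))^2 / w"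

definition "traj l t = (case l of (u,v,w) \<Rightarrow> (Xf u w t, Yf v w t, Zf u v w t))"
definition "ltraj l t = (case l of (u,v,w) \<Rightarrow> (Uf u w t, Vf v w t, w))"

lemma dX: "w \<noteq> 0 \<Longrightarrow> ((\<lambda>t. Xf u w t) has_real_derivative Uf u w t) (at t)"
  unfolding Xf_def Uf_def
  by (auto intro!: derivative_eq_intros simp: field_simps)
lemma dY: "w \<noteq> 0 \<Longrightarrow> ((\<lambda>t. Yf v w t) has_real_derivative Vf v w t) (at t)"
  unfolding Yf_def Vf_def
  by (auto intro!: derivative_eq_intros simp: field_simps)
lemma dU: "((\<lambda>t. Uf u w t) has_real_derivative (- (w^2 * Xf u w t))) (at t)" if "w \<noteq> 0"
  unfolding Xf_def Uf_def using that
  by (auto intro!: derivative_eq_intros simp: field_simps power2_eq_square)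
lemma dV: "((\<lambda>t. Vf v w t) has_real_derivative (- (w^2 * Yf v w t))) (at t)" if "w \<noteq> 0"
  unfolding Yf_def Vf_def using that
  by (auto intro!: derivative_eq_intros simp: field_simps power2_eq_square)
lemma dZ: "((\<lambda>t. Zf u v w t) has_real_derivative ((Xf u w t)^2 + (Yf v w t)^2) * w) (at t)" if "w \<noteq> 0"
proof -
  have e: "(sin (w*t))^2 = 1 - (cos (w*t))^2" by (simp add: sin_squared_eq)
  show ?thesis
  unfolding Zf_def Xf_def Yf_def using that
  apply (auto intro!: derivative_eq_intros)
  apply (simp add: field_simps power2_eq_square rr_def)
  using sin_cos_squared_add[of "t*w"] by algebra
qed

lemma vd: "(f has_real_derivative a) (at t) \<Longrightarrow> (f has_vector_derivative a) (at t)"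
  by (simp add: has_real_derivative_iff_has_vector_derivative)

lemma lift_ok:
  assumes "w \<noteq> 0"
  shows "normal_lift (x0,y0,z0) (u,v,w) (traj (u,v,w)) (ltraj (u,v,w))"
  unfolding normal_lift_def
proof (intro conjI allI)
  show "traj (u, v, w) 0 = (x0, y0, z0)" "ltraj (u, v, w) 0 = (u, v, w)"
    by (simp_all add: traj_def ltraj_def Xf_def Yf_def Zf_def Uf_def Vf_def)
  fix t
  show "(traj (u, v, w) has_vector_derivative
        (case traj (u, v, w) t of (x, y, z) \<Rightarrow> case ltraj (u, v, w) t of (u, v, w) \<Rightarrow> (u, v, (x^2 + y^2) * w))) (at t)"
    unfolding traj_def ltraj_def
    using assms by (auto intro!: has_vector_derivative_Pair vd dX dY dZ)
  show "(ltraj (u, v, w) has_vector_derivative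
        (case traj (u, v, w) t of (x, y, z) \<Rightarrow> case ltraj (u, v, w) t of (u, v, w) \<Rightarrow> (- (w^2) * x, - (w^2) * y, 0))) (at t)"
    unfolding traj_def ltraj_def
    using assms by (auto intro!: has_vector_derivative_Pair vd dU dV)
qed

lemma energy_uniq:
  fixes qx lu :: "real \<Rightarrow> real"
  assumes w: "w \<noteq> 0"
    and d1: "\<And>t. (qx has_real_derivative lu t) (at t)"
    and d2: "\<And>t. (lu has_real_derivative (- (w^2) * qx t)) (at t)"
    and d3: "\<And>t. (X has_real_derivative U t) (at t)"
    and d4: "\<And>t. (U has_real_derivative (- (w^2 * X t))) (at t)"
    and i: "qx 0 = X 0" "lu 0 = U 0"
  shows "qx t = X t"
proof -
  define F where "F t = w^2 * (qx t - X t)^2 + (lu t - U t)^2" for t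
  have "\<forall>t. (F has_real_derivative 0) (at t)"
  proof
    fix t
    show "(F has_real_derivative 0) (at t)"
      unfolding F_def
      apply (rule derivative_eq_intros refl d1 d2 d3 d4)+
      apply (simp add: algebra_simps)
      done
  qed
  then have "F t = F 0" by (rule DERIV_isconst_all)
  also have "F 0 = 0" using i by (simp add: F_def)
  finally have "w^2 * (qx t - X t)^2 + (lu t - U t)^2 = 0" by (simp add: F_def)
  moreover have "w^2 * (qx t - X t)^2 \<ge> 0" "(lu t - U t)^2 \<ge> 0" by simp_all
  ultimately have "w^2 * (qx t - X t)^2 = 0" by linarith
  with w show ?thesis by simp
qed

lemma lift_uniq:
  assumes w: "w \<noteq> 0" and nl: "normal_lift (x0,y0,z0) (u,v,w) q l"
  shows "q = traj (u,v,w)"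
proof -
  define qx where "qx = (\<lambda>t. fst (q t))"
  define qy where "qy = (\<lambda>t. fst (snd (q t)))"
  define qz where "qz = (\<lambda>t. snd (snd (q t)))"
  define lu where "lu = (\<lambda>t. fst (l t))"
  define lv where "lv = (\<lambda>t. fst (snd (l t)))"
  define lw where "lw = (\<lambda>t. snd (snd (l t)))"
  have q: "q t = (qx t, qy t, qz t)" for t by (simp add: qx_def qy_def qz_def)
  have l: "l t = (lu t, lv t, lw t)" for t by (simp add: lu_def lv_def lw_def)
  have q0: "qx 0 = x0" "qy 0 = y0" "qz 0 = z0" using nl by (simp_all add: normal_lift_def qx_def qy_def qz_def)
  have l0: "lu 0 = u" "lv 0 = v" "lw 0 = w" using nl by (simp_all add: normal_lift_def lu_def lv_def lw_def)
  have dq: "(q has_vector_derivative (lu t, lv t, (qx t ^2 + qy t ^2) * lw t)) (at t)" for t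
    using nl unfolding normal_lift_def by (metis (no_types, lifting) case_prod_conv q l)
  have dl: "(l has_vector_derivative (- (lw t ^2) * qx t, - (lw t ^2) * qy t, 0)) (at t)" for t
    using nl unfolding normal_lift_def by (metis (no_types, lifting) case_prod_conv q l)
  have dqx: "(qx has_real_derivative lu t) (at t)"
   and dqy: "(qy has_real_derivative lv t) (at t)"
   and dqz: "(qz has_real_derivative (qx t ^2 + qy t ^2) * lw t) (at t)" for t
    using comp_deriv[OF dq[of t]] unfolding qx_def qy_def qz_def by simp_all
  have dlu: "(lu has_real_derivative (- (lw t ^2) * qx t)) (at t)"
   and dlv: "(lv has_real_derivative (- (lw t ^2) * qy t)) (at t)"
   and dlw: "(lw has_real_derivative 0) (at t)" for t
    using comp_deriv[OF dl[of t]] unfolding lu_def lv_def lw_def by simp_all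
  have lwc: "lw t = w" for t
    using DERIV_isconst_all[of lw t 0] dlw l0 by auto
  have ex: "qx t = Xf u w t" for t
    apply (rule energy_uniq[OF w dqx _ dX[OF w] dU[OF w]])
    using dlu lwc q0 l0 by (auto simp: Xf_def Uf_def)
  have ey: "qy t = Yf v w t" for t
    apply (rule energy_uniq[OF w dqy _ dY[OF w] dV[OF w]])
    using dlv lwc q0 l0 by (auto simp: Yf_def Vf_def)
  have ez: "qz t = Zf u v w t" for t
  proof -
    have "\<forall>t. ((\<lambda>t. qz t - Zf u v w t) has_real_derivative 0) (at t)"
    proof
      fix t
      show "((\<lambda>t. qz t - Zf u v w t) has_real_derivative 0) (at t)"
        using DERIV_diff[OF dqz[of t] dZ[OF w, of u v t]] by (simp add: ex ey lwc)
    qed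
    from DERIV_isconst_all[OF this, of t 0] q0 show ?thesis by (simp add: Zf_def)
  qed
  show ?thesis
    by (rule ext) (simp add: q traj_def ex ey ez)
qed

lemma normal_traj_eq:
  assumes "w \<noteq> 0"
  shows "normal_traj (x0,y0,z0) (u,v,w) = traj (u,v,w)"
  unfolding normal_traj_def
  apply (rule the_equality)
  using lift_ok[OF assms] lift_uniq[OF assms] by blast+

lemma normal_traj_eq':
  assumes "snd (snd l) \<noteq> 0"
  shows "normal_traj (x0,y0,z0) l = traj l"
  using normal_traj_eq[of "snd (snd l)" "fst l" "fst (snd l)"] assms by simp

end

lemma alg_r2:
  fixes a b p q S C rr :: real
  assumes "p^2+q^2=1" "S^2+C^2=1" "rr = a^2 + (b^2-a^2)*p^2" "rr \<noteq> 0"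
  shows "rr * ((C + (b^2-a^2)*p*q/rr * S)^2 + (a*b/rr*S)^2) = a^2 + (b^2-a^2)*(S*q + C*p)^2"
proof -
  have "rr * ((C + (b^2-a^2)*p*q/rr * S)^2 + (a*b/rr*S)^2) =
     (rr^2 * C^2 + 2*rr*(b^2-a^2)*p*q*S*C + ((b^2-a^2)^2*p^2*q^2 + a^2*b^2)*S^2)/rr"
    using assms(4) by (simp add: field_simps power2_eq_square)
  also have "(b^2-a^2)^2*p^2*q^2 + a^2*b^2 = rr*(a^2*p^2+b^2*q^2)"
    using assms(1,3) by algebra
  also have "(rr^2 * C^2 + 2*rr*(b^2-a^2)*p*q*S*C + rr*(a^2*p^2+b^2*q^2)*S^2)/rr
      = rr * C^2 + 2*(b^2-a^2)*p*q*S*C + (a^2*p^2+b^2*q^2)*S^2"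
    using assms(4) by (simp add: field_simps power2_eq_square)
  also have "\<dots> = a^2 + (b^2-a^2)*(S*q + C*p)^2"
    using assms(1,2,3) by algebra
  finally show ?thesis .
qed

context ctx begin

lemma rr_pos: "rr > 0" using pos by (simp add: rr_def)

definition "wA a b = 1 / sqrt (a^2 + b^2)"
definition "MA a b = (rr - a^2) * (b^2 - rr)"
definition "KA a b = a * b * wA a b"
definition "LA a b = wA a b * sqrt (MA a b)"
definition "Psi p = (case p of (a,b) \<Rightarrow> ((x0 * LA a b - y0 * KA a b)/rr, (y0 * LA a b + x0 * KA a b)/rr, wA a b))"
definition "Aset = {0<..<sqrt rr} \<times> {sqrt rr<..}"
definition "Sset = {l \<in> E1 (x0, y0, z0). Kof (x0, y0, z0) l > 0 \<and> Lof (x0, y0, z0) l > 0 \<and> wof l > 0}"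
definition "cc a b = sqrt (MA a b) / rr"
definition "kk a b = a * b / rr"
definition "G1 a b t = cos (wA a b * t) + cc a b * sin (wA a b * t)"
definition "G2 a b t = kk a b * sin (wA a b * t)"
definition "ph a b = arcsin (sqrt ((rr - a^2)/(b^2 - a^2)))"

lemma A_facts:
  assumes "(a,b) \<in> Aset"
  shows "0 < a" "a^2 < rr" "rr < b^2" "a < b" "a^2 < b^2" "MA a b > 0" "wA a b > 0"
    "wA a b ^2 * (a^2+b^2) = 1"
proof -
  have a: "0 < a" "a < sqrt rr" and b: "sqrt rr < b" using assms by (auto simp: Aset_def)
  show "0 < a" by fact
  show "a^2 < rr" using a rr_pos by (metis less_eq_real_def power_strict_mono real_sqrt_pow2 zero_less_numeral)
  moreover show "rr < b^2" using b rr_pos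
    by (metis less_le_trans power_strict_mono real_sqrt_ge_zero real_sqrt_pow2 zero_less_numeral less_imp_le)
  ultimately show "a^2 < b^2" by linarith
  show "a < b" using a b by linarith
  show "MA a b > 0" using \<open>a^2 < rr\<close> \<open>rr < b^2\<close> by (simp add: MA_def)
  have "a^2 + b^2 > 0" using a by (simp add: add_pos_nonneg)
  then show "wA a b > 0" by (simp add: wA_def)
  show "wA a b ^2 * (a^2+b^2) = 1" using \<open>a^2 + b^2 > 0\<close> a
    by (simp add: wA_def power_divide)
qed

lemma ph_facts:
  assumes "(a,b) \<in> Aset"
  shows "0 < ph a b" "ph a b < pi/2" "rr = a^2 + (b^2-a^2) * (sin (ph a b))^2"
    "sin (ph a b) > 0" "cos (ph a b) > 0"
    "sqrt (MA a b) = (b^2-a^2) * sin (ph a b) * cos (ph a b)"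
proof -
  note f = A_facts[OF assms]
  define x where "x = (rr - a^2)/(b^2 - a^2)"
  have x: "0 < x" "x < 1" using f by (auto simp: x_def field_simps)
  have sx: "0 < sqrt x" "sqrt x < 1" using x by auto
  have s: "sin (ph a b) = sqrt x" unfolding ph_def x_def[symmetric]
    using sx by (intro sin_arcsin) linarith+
  show "0 < ph a b" unfolding ph_def x_def[symmetric] using sx arcsin_less_arcsin[of 0 "sqrt x"] arcsin_0 by linarith
  show "ph a b < pi/2" unfolding ph_def x_def[symmetric] using sx
    using arcsin_less_arcsin[of "sqrt x" 1] arcsin_1 by linarith
  show "sin (ph a b) > 0" using s sx by simp
  have s2: "(sin (ph a b))^2 = x" using s x by simp
  then show "rr = a^2 + (b^2-a^2) * (sin (ph a b))^2" using f by (simp add: x_def field_simps)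
  show "cos (ph a b) > 0" using \<open>0 < ph a b\<close> \<open>ph a b < pi/2\<close> by (simp add: cos_gt_zero)
  have c2: "(cos (ph a b))^2 = 1 - x" using s2 by (simp add: cos_squared_eq)
  have ne: "b^2 - a^2 \<noteq> 0" using f by simp
  have e1: "rr - a^2 = (b^2-a^2) * x" using ne by (simp add: x_def)
  have e2: "b^2 - rr = (b^2-a^2)*(1-x)" using ne by (simp add: x_def field_simps)
  have "MA a b = (b^2-a^2)*x*((b^2-a^2)*(1-x))" by (simp add: MA_def e1 e2)
  also have "\<dots> = ((b^2-a^2) * sin (ph a b) * cos (ph a b))^2"
    unfolding power_mult_distrib s2 c2 by (simp add: power2_eq_square)
  finally have "MA a b = ((b^2-a^2) * sin (ph a b) * cos (ph a b))^2" .
  moreover have "(b^2-a^2) * sin (ph a b) * cos (ph a b) \<ge> 0"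
    using f \<open>sin (ph a b) > 0\<close> \<open>cos (ph a b) > 0\<close> by simp
  ultimately show "sqrt (MA a b) = (b^2-a^2) * sin (ph a b) * cos (ph a b)" by simp
qed

lemma phase_eq:
  assumes "(a,b) \<in> Aset"
  shows "phase (sqrt rr) a b = ph a b"
  unfolding phase_def
proof (rule the_equality)
  note p = ph_facts[OF assms]
  show "0 < ph a b \<and> ph a b < pi / 2 \<and> (sqrt rr)^2 = a^2 + (b^2 - a^2) * (sin (ph a b))^2"
    using p rr_pos by simp
  fix \<phi> assume h: "0 < \<phi> \<and> \<phi> < pi / 2 \<and> (sqrt rr)^2 = a^2 + (b^2 - a^2) * (sin \<phi>)^2"
  have ab: "b^2 - a^2 > 0" using A_facts[OF assms] by simp
  have "(sin \<phi>)^2 = (sin (ph a b))^2" using h p(3) rr_pos ab by simp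
  moreover have "sin \<phi> > 0" using h by (intro sin_gt_zero) auto
  ultimately have "sin \<phi> = sin (ph a b)" using p(4)
    by (metis less_eq_real_def power2_eq_imp_eq)
  then have "arcsin (sin \<phi>) = arcsin (sin (ph a b))" by simp
  then show "\<phi> = ph a b" using h p(1,2) by (simp add: arcsin_sin)
qed

lemma traj_Psi:
  assumes "(a,b) \<in> Aset"
  shows "fst (traj (Psi (a,b)) t) = x0 * G1 a b t - y0 * G2 a b t"
    "fst (snd (traj (Psi (a,b)) t)) = y0 * G1 a b t + x0 * G2 a b t"
proof -
  note f = A_facts[OF assms]
  have w: "wA a b \<noteq> 0" using f by simp
  have L: "LA a b / wA a b = sqrt (MA a b)" and K: "KA a b / wA a b = a * b"
    using w by (simp_all add: LA_def KA_def)
  show "fst (traj (Psi (a,b)) t) = x0 * G1 a b t - y0 * G2 a b t"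
    unfolding traj_def Psi_def Xf_def G1_def G2_def cc_def kk_def
    using w rr_pos by (simp add: LA_def KA_def field_simps)
  show "fst (snd (traj (Psi (a,b)) t)) = y0 * G1 a b t + x0 * G2 a b t"
    unfolding traj_def Psi_def Yf_def G1_def G2_def cc_def kk_def
    using w rr_pos by (simp add: LA_def KA_def field_simps)
qed

lemma r2_Psi:
  assumes "(a,b) \<in> Aset"
  shows "(x0 * G1 a b t - y0 * G2 a b t)^2 + (y0 * G1 a b t + x0 * G2 a b t)^2
      = a^2 + (b^2-a^2) * (sin (wA a b * t + ph a b))^2"
proof -
  note p = ph_facts[OF assms]
  have "(x0 * G1 a b t - y0 * G2 a b t)^2 + (y0 * G1 a b t + x0 * G2 a b t)^2
     = rr * ((G1 a b t)^2 + (G2 a b t)^2)"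
    by (simp add: rr_def power2_eq_square algebra_simps)
  also have "\<dots> = a^2 + (b^2-a^2) * (sin (wA a b * t) * cos (ph a b) + cos (wA a b * t) * sin (ph a b))^2"
    unfolding G1_def G2_def cc_def kk_def p(6)
    by (rule alg_r2[of "sin (ph a b)" "cos (ph a b)"]) (use p rr_pos in auto)
  also have "\<dots> = a^2 + (b^2-a^2) * (sin (wA a b * t + ph a b))^2"
    by (simp add: sin_add)
  finally show ?thesis .
qed

lemma cyl_r_Psi:
  assumes "(a,b) \<in> Aset"
  shows "cyl_r (normal_traj (x0,y0,z0) (Psi (a,b)) t) = sqrt (a^2 + (b^2-a^2) * (sin (wA a b * t + ph a b))^2)"
proof -
  have w: "snd (snd (Psi (a,b))) \<noteq> 0" using A_facts[OF assms] by (simp add: Psi_def)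
  have "cyl_r (normal_traj (x0,y0,z0) (Psi (a,b)) t) =
     sqrt ((fst (traj (Psi (a,b)) t))^2 + (fst (snd (traj (Psi (a,b)) t)))^2)"
    unfolding normal_traj_eq'[OF w] cyl_r_def by (simp add: case_prod_beta)
  then show ?thesis using r2_Psi[OF assms] traj_Psi[OF assms] by simp
qed

end

context ctx begin

lemma Kof_eq: "Kof (x0,y0,z0) l = x0 * fst (snd l) - y0 * fst l"
  by (simp add: Kof_def case_prod_beta)
lemma Lof_eq: "Lof (x0,y0,z0) l = x0 * fst l + y0 * fst (snd l)"
  by (simp add: Lof_def case_prod_beta)
lemma E1_eq: "l \<in> E1 (x0,y0,z0) \<longleftrightarrow> (fst l)^2 + (fst (snd l))^2 + rr * (snd (snd l))^2 = 1"
  using rr_pos by (simp add: E1_def cyl_r_def case_prod_beta rr_def)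

lemma Psi_props:
  assumes "(a,b) \<in> Aset"
  shows "Kof (x0,y0,z0) (Psi (a,b)) = KA a b" "Lof (x0,y0,z0) (Psi (a,b)) = LA a b"
    "wof (Psi (a,b)) = wA a b" "Psi (a,b) \<in> Sset"
proof -
  note f = A_facts[OF assms]
  have nz: "x0*x0+y0*y0 \<noteq> 0" using rr_pos unfolding rr_def power2_eq_square by linarith
  have rz: "rr \<noteq> 0" using rr_pos by simp
  have "x0 * ((y0 * LA a b + x0 * KA a b)/rr) - y0 * ((x0 * LA a b - y0 * KA a b)/rr)
      = (x0 * (y0 * LA a b + x0 * KA a b) - y0 * (x0 * LA a b - y0 * KA a b))/rr"
    using rz by (simp add: field_simps)
  also have "x0 * (y0 * LA a b + x0 * KA a b) - y0 * (x0 * LA a b - y0 * KA a b) = KA a b * rr"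
    by (simp add: rr_def algebra_simps power2_eq_square)
  finally show K: "Kof (x0,y0,z0) (Psi (a,b)) = KA a b"
    unfolding Kof_eq Psi_def using rz by simp
  have "x0 * ((x0 * LA a b - y0 * KA a b)/rr) + y0 * ((y0 * LA a b + x0 * KA a b)/rr)
      = (x0 * (x0 * LA a b - y0 * KA a b) + y0 * (y0 * LA a b + x0 * KA a b))/rr"
    using rz by (simp add: field_simps)
  also have "x0 * (x0 * LA a b - y0 * KA a b) + y0 * (y0 * LA a b + x0 * KA a b) = LA a b * rr"
    by (simp add: rr_def algebra_simps power2_eq_square)
  finally show L: "Lof (x0,y0,z0) (Psi (a,b)) = LA a b"
    unfolding Lof_eq Psi_def using rz by simp
  show w: "wof (Psi (a,b)) = wA a b" by (simp add: wof_def Psi_def)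
  have Kp: "KA a b > 0" using f by (simp add: KA_def)
  have Lp: "LA a b > 0" using f by (simp add: LA_def)
  have lag: "(x0 * LA a b - y0 * KA a b)^2 + (y0 * LA a b + x0 * KA a b)^2 = rr * ((LA a b)^2 + (KA a b)^2)"
    by (simp add: rr_def algebra_simps power2_eq_square)
  have L2: "(LA a b)^2 = (wA a b)^2 * MA a b" using f by (simp add: LA_def power_mult_distrib)
  have K2: "(KA a b)^2 = (wA a b)^2 * a^2 * b^2" by (simp add: KA_def power_mult_distrib)
  have "(fst (Psi (a,b)))^2 + (fst (snd (Psi (a,b))))^2 + rr * (snd (snd (Psi (a,b))))^2
      = ((x0 * LA a b - y0 * KA a b)^2 + (y0 * LA a b + x0 * KA a b)^2)/rr^2 + rr * (wA a b)^2"
    unfolding Psi_def by (simp add: power_divide flip: add_divide_distrib diff_divide_distrib)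
  also have "\<dots> = ((LA a b)^2 + (KA a b)^2)/rr + rr * (wA a b)^2"
    unfolding lag using rr_pos by (simp add: power2_eq_square)
  also have "\<dots> = (wA a b)^2 * (MA a b + a^2*b^2 + rr^2)/rr"
    unfolding L2 K2 using rr_pos by (simp add: field_simps power2_eq_square)
  also have "MA a b + a^2*b^2 + rr^2 = rr * (a^2+b^2)" by (simp add: MA_def algebra_simps power2_eq_square)
  also have "(wA a b)^2 * (rr * (a^2+b^2))/rr = 1" using f(8) rr_pos by simp
  finally show "Psi (a,b) \<in> Sset" unfolding Sset_def E1_eq using K L w Kp Lp f by simp
qed

abbreviation "Rf l t \<equiv> cyl_r (normal_traj (x0,y0,z0) l t)"

lemma R_bounds:
  assumes "(a,b) \<in> Aset"
  shows "Rf (Psi (a,b)) t \<ge> a" "Rf (Psi (a,b)) t \<le> b"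
    "(Rf (Psi (a,b)) t)^2 = a^2 + (b^2-a^2) * (sin (wA a b * t + ph a b))^2"
    "Rf (Psi (a,b)) ((real n * pi - ph a b) / wA a b) = a"
    "Rf (Psi (a,b)) ((real n * pi + pi/2 - ph a b) / wA a b) = b"
proof -
  note f = A_facts[OF assms]
  have s1: "(sin x)^2 \<le> 1" for x :: real by (simp add: sin_squared_eq)
  have nn: "0 \<le> a^2 + (b^2-a^2) * (sin (wA a b * t + ph a b))^2" using f by (simp add: add_nonneg_nonneg)
  show "(Rf (Psi (a,b)) t)^2 = a^2 + (b^2-a^2) * (sin (wA a b * t + ph a b))^2"
    unfolding cyl_r_Psi[OF assms] using nn by simp
  have "a^2 \<le> a^2 + (b^2-a^2) * (sin (wA a b * t + ph a b))^2" using f by simp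
  then have "sqrt (a^2) \<le> sqrt (a^2 + (b^2-a^2) * (sin (wA a b * t + ph a b))^2)"
    using real_sqrt_le_mono by blast
  then show "Rf (Psi (a,b)) t \<ge> a" unfolding cyl_r_Psi[OF assms] using f by simp
  have "(b^2-a^2) * (sin (wA a b * t + ph a b))^2 \<le> (b^2-a^2) * 1"
    using f s1 by (intro mult_left_mono) auto
  then have "a^2 + (b^2-a^2) * (sin (wA a b * t + ph a b))^2 \<le> b^2" by simp
  then have "sqrt (a^2 + (b^2-a^2) * (sin (wA a b * t + ph a b))^2) \<le> sqrt (b^2)"
    using real_sqrt_le_mono by blast
  then show "Rf (Psi (a,b)) t \<le> b" unfolding cyl_r_Psi[OF assms] using f by simp
  have w: "wA a b \<noteq> 0" using f by simp
  show "Rf (Psi (a,b)) ((real n * pi - ph a b) / wA a b) = a"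
    unfolding cyl_r_Psi[OF assms] using w f by simp
  have "sin (wA a b * ((real n * pi + pi/2 - ph a b) / wA a b) + ph a b) = cos (real n * pi)"
    using w by (simp add: sin_add)
  then have "(sin (wA a b * ((real n * pi + pi/2 - ph a b) / wA a b) + ph a b))^2 = 1"
    by (cases "even n") simp_all
  then show "Rf (Psi (a,b)) ((real n * pi + pi/2 - ph a b) / wA a b) = b"
    unfolding cyl_r_Psi[OF assms] using f by simp
qed

lemma rmin_Psi: "(a,b) \<in> Aset \<Longrightarrow> rmin (x0,y0,z0) (Psi (a,b)) = a"
  unfolding rmin_def
proof (rule cInf_eq_minimum)
  assume h: "(a,b) \<in> Aset"
  have "a = Rf (Psi (a,b)) ((real 0 * pi - ph a b) / wA a b)" using R_bounds(4)[OF h] by metis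
  then show "a \<in> range (Rf (Psi (a,b)))" by (rule range_eqI)
  show "\<And>x. x \<in> range (Rf (Psi (a, b))) \<Longrightarrow> a \<le> x" using R_bounds(1)[OF h] by auto
qed

lemma rmax_Psi: "(a,b) \<in> Aset \<Longrightarrow> rmax (x0,y0,z0) (Psi (a,b)) = b"
  unfolding rmax_def
proof (rule cSup_eq_maximum)
  assume h: "(a,b) \<in> Aset"
  have "b = Rf (Psi (a,b)) ((real 0 * pi + pi/2 - ph a b) / wA a b)" using R_bounds(5)[OF h] by metis
  then show "b \<in> range (Rf (Psi (a,b)))" by (rule range_eqI)
  show "\<And>x. x \<in> range (Rf (Psi (a, b))) \<Longrightarrow> x \<le> b" using R_bounds(2)[OF h] by auto
qed

lemma osc:
  assumes "(a,b) \<in> Aset"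
  shows "\<forall>T. \<exists>t>T. Rf (Psi (a,b)) t = a" "\<forall>T. \<exists>t>T. Rf (Psi (a,b)) t = b"
proof -
  note f = A_facts[OF assms]
  have w: "wA a b > 0" using f by simp
  show "\<forall>T. \<exists>t>T. Rf (Psi (a,b)) t = a"
  proof
    fix T
    obtain n :: nat where n: "real n > (T * wA a b + ph a b + 1) / pi" using reals_Archimedean2 by blast
    have "real n * pi > T * wA a b + ph a b + 1" using n pi_gt_zero by (simp add: field_simps)
    then have "T * wA a b < real n * pi - ph a b" using pi_gt_zero by linarith
    then have "(real n * pi - ph a b) / wA a b > T" using w by (simp add: pos_less_divide_eq)
    then show "\<exists>t>T. Rf (Psi (a,b)) t = a" using R_bounds(4)[OF assms] by blast
  qed
  show "\<forall>T. \<exists>t>T. Rf (Psi (a,b)) t = b"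
  proof
    fix T
    obtain n :: nat where n: "real n > (T * wA a b + ph a b + 1) / pi" using reals_Archimedean2 by blast
    have "real n * pi > T * wA a b + ph a b + 1" using n pi_gt_zero by (simp add: field_simps)
    then have "T * wA a b < real n * pi + pi/2 - ph a b" using pi_gt_zero by linarith
    then have "(real n * pi + pi/2 - ph a b) / wA a b > T" using w by (simp add: pos_less_divide_eq)
    then show "\<exists>t>T. Rf (Psi (a,b)) t = b" using R_bounds(5)[OF assms] by blast
  qed
qed

definition "wl l = snd (snd l)"
definition "Dl l = sqrt (1/(wl l)^4 - 4*(x0 * fst (snd l) - y0 * fst l)^2/(wl l)^2)"
definition "aS l = sqrt ((1/(wl l)^2 - Dl l)/2)"
definition "bS l = sqrt ((1/(wl l)^2 + Dl l)/2)"

lemma S_surj: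
  assumes "l \<in> Sset"
  shows "(aS l, bS l) \<in> Aset" "Psi (aS l, bS l) = l"
proof -
  obtain u v w where l: "l = (u,v,w)" by (cases l) auto
  define K where "K = x0 * v - y0 * u"
  define L where "L = x0 * u + y0 * v"
  have Kp: "K > 0" and Lp: "L > 0" and wp: "w > 0" and e1: "u^2 + v^2 + rr * w^2 = 1"
    using assms unfolding Sset_def E1_eq Kof_eq Lof_eq l K_def L_def by (auto simp: wof_def)
  have lag: "K^2 + L^2 = rr * (u^2+v^2)" by (simp add: K_def L_def rr_def algebra_simps power2_eq_square)
  have wl: "wl l = w" by (simp add: wl_def l)
  define D where "D = sqrt (1/w^4 - 4*K^2/w^2)"
  have Dl: "Dl l = D" by (simp add: Dl_def D_def wl_def l K_def)
  have am: "4 * (rr * w^2) * (1 - rr * w^2) \<le> 1"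
  proof -
    have "0 \<le> (2 * (rr * w^2) - 1)^2" by simp
    then show ?thesis by (simp add: algebra_simps power2_eq_square)
  qed
  have "4*K^2*w^2 < 4*(K^2+L^2)*w^2" using Lp wp by simp
  also have "\<dots> = 4 * (rr * w^2) * (1 - rr * w^2)"
  proof -
    have N: "u^2+v^2 = 1 - rr*w^2" using e1 by linarith
    show ?thesis unfolding lag N by (simp add: algebra_simps)
  qed
  finally have kw: "4*K^2*w^2 < 1" using am by linarith
  have w4: "w^4 > 0" using wp by simp
  have rad: "1/w^4 - 4*K^2/w^2 > 0"
  proof -
    have "4*K^2/w^2 = 4*K^2*w^2/w^4" using wp by (simp add: field_simps power2_eq_square power4_eq_xxxx)
    then show ?thesis using kw w4 by (simp add: divide_strict_right_mono diff_divide_distrib)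
  qed
  have Dp: "D > 0" using rad by (simp add: D_def)
  have D2: "D^2 = 1/w^4 - 4*K^2/w^2" using rad by (simp add: D_def)
  have iw: "1/w^4 = (1/w^2)^2" by (simp add: power_divide flip: power_mult) 
  have Dlt: "D < 1/w^2"
  proof -
    have "D^2 < (1/w^2)^2" using D2 Kp wp iw by simp
    then show ?thesis using Dp wp by (smt (verit) power_mono zero_le_divide_1_iff zero_le_power2)
  qed
  define a where "a = sqrt ((1/w^2 - D)/2)"
  define b where "b = sqrt ((1/w^2 + D)/2)"
  have aS: "aS l = a" by (simp add: aS_def a_def wl Dl)
  have bS: "bS l = b" by (simp add: bS_def b_def wl Dl)
  have a2: "a^2 = (1/w^2 - D)/2" using Dlt by (simp add: a_def)
  have b2: "b^2 = (1/w^2 + D)/2" using Dp wp by (simp add: b_def add_pos_pos)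
  have ap: "a > 0" using Dlt by (simp add: a_def)
  have bp: "b > 0" using Dp wp by (simp add: b_def add_pos_pos)
  have ab2: "a^2 + b^2 = 1/w^2" using a2 b2 by simp
  have ablt: "a^2 < b^2" using a2 b2 Dp by simp
  have wA: "wA a b = w" using wp by (simp add: wA_def ab2 real_sqrt_divide)
  have "(a*b)^2 = a^2 * b^2" by (simp add: power_mult_distrib)
  also have "\<dots> = ((1/w^2)-D)*((1/w^2)+D)/4" unfolding a2 b2 by simp
  also have "\<dots> = ((1/w^2)^2 - D^2)/4" by (simp add: algebra_simps power2_eq_square)
  also have "\<dots> = (K/w)^2" unfolding D2 iw[symmetric] by (simp add: power_divide)
  finally have "a*b = K/w" using ap bp Kp wp
    by (metis divide_pos_pos less_eq_real_def mult_pos_pos power2_eq_imp_eq)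
  then have KA: "KA a b = K" using wp by (simp add: KA_def wA)
  have "MA a b = (rr - a^2) * (b^2 - rr)" by (simp add: MA_def)
  also have "\<dots> = rr * (a^2+b^2) - rr^2 - (a*b)^2" by (simp add: algebra_simps power2_eq_square)
  also have "\<dots> = rr/w^2 - rr^2 - K^2/w^2" unfolding ab2 \<open>a*b = K/w\<close> by (simp add: power_divide)
  also have "\<dots> = (L/w)^2"
  proof -
    have N: "u^2+v^2 = 1 - rr*w^2" using e1 by linarith
    have "L^2 = rr - rr^2 * w^2 - K^2" using lag unfolding N by algebra
    moreover have "rr/w^2 - rr^2 - K^2/w^2 = (rr - rr^2*w^2 - K^2)/w^2" using wp by (simp add: field_simps)
    ultimately show ?thesis by (simp add: power_divide)
  qed
  finally have MA: "MA a b = (L/w)^2" .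
  have LA: "LA a b = L" using wp Lp by (simp add: LA_def MA wA)
  show "Psi (aS l, bS l) = l"
  proof -
    have 1: "x0 * L - y0 * K = u * rr" "y0 * L + x0 * K = v * rr"
      by (simp_all add: K_def L_def rr_def algebra_simps power2_eq_square)
    show ?thesis unfolding aS bS Psi_def using KA LA wA rr_pos by (simp add: l 1)
  qed
  have "MA a b > 0" using MA Lp wp by simp
  then have "rr > a^2 \<and> b^2 > rr" using ablt unfolding MA_def
    by (smt (verit) mult_nonneg_nonpos mult_nonpos_nonneg)
  then have "a < sqrt rr" "sqrt rr < b" using ap bp
    by (metis real_less_rsqrt, metis real_sqrt_less_iff real_sqrt_abs abs_of_pos)
  then show "(aS l, bS l) \<in> Aset" using ap by (simp add: Aset_def aS bS)
qed

end

context ctx begin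

definition "Phi l = (rmin (x0,y0,z0) l, rmax (x0,y0,z0) l)"

lemma Phi_Psi: "p \<in> Aset \<Longrightarrow> Phi (Psi p) = p"
  by (cases p) (simp add: Phi_def rmin_Psi rmax_Psi)

lemma Phi_S: "l \<in> Sset \<Longrightarrow> Phi l = (aS l, bS l)"
  using Phi_Psi[OF S_surj(1)] S_surj(2) by metis

lemma Psi_Phi: "l \<in> Sset \<Longrightarrow> Psi (Phi l) = l"
  using Phi_S S_surj(2) by metis

lemma Psi_in: "p \<in> Aset \<Longrightarrow> Psi p \<in> Sset"
  by (cases p) (simp add: Psi_props)

lemma Phi_in: "l \<in> Sset \<Longrightarrow> Phi l \<in> Aset"
  using Phi_S S_surj(1) by metis

lemma bij: "bij_betw Phi Sset Aset"
  by (rule bij_betw_byWitness[where f'=Psi]) (auto simp: Psi_Phi Phi_Psi Psi_in Phi_in)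

lemma inv_eq: "p \<in> Aset \<Longrightarrow> inv_into Sset Phi p = Psi p"
  by (rule inv_into_f_eq) (use bij in \<open>auto simp: bij_betw_def Psi_in Phi_Psi\<close>)

lemma cont_Phi: "continuous_on Sset Phi"
proof -
  have "continuous_on Sset (\<lambda>l. (aS l, bS l))"
    unfolding aS_def bS_def Dl_def wl_def
    by (intro continuous_intros) (auto simp: Sset_def wof_def)
  then show ?thesis by (rule continuous_on_cong[THEN iffD1, rotated 2]) (auto simp: Phi_S)
qed

definition "dwf a b h1 h2 = - (wA a b ^3) * (a*h1 + b*h2)"
definition "dKf a b h1 h2 = wA a b ^3 * (b^3*h1 + a^3*h2)"
definition "La a b = - a * wA a b ^3 * sqrt (MA a b) - wA a b * a * (b^2 - rr) / sqrt (MA a b)"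
definition "Lb a b = - b * wA a b ^3 * sqrt (MA a b) + wA a b * b * (rr - a^2) / sqrt (MA a b)"
definition "dLf a b h1 h2 = La a b * h1 + Lb a b * h2"
definition "Psi' p h = ((x0 * dLf (fst p) (snd p) (fst h) (snd h) - y0 * dKf (fst p) (snd p) (fst h) (snd h))/rr,
   (y0 * dLf (fst p) (snd p) (fst h) (snd h) + x0 * dKf (fst p) (snd p) (fst h) (snd h))/rr,
   dwf (fst p) (snd p) (fst h) (snd h))"

lemma d_wA:
  assumes "(a,b) \<in> Aset"
  shows "((\<lambda>p. wA (fst p) (snd p)) has_derivative (\<lambda>h. dwf a b (fst h) (snd h))) (at (a,b))"
proof -
  note f = A_facts[OF assms]
  have s: "a^2 + b^2 > 0" using f by (simp add: add_pos_nonneg)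
  show ?thesis
    unfolding wA_def dwf_def
    using s
    apply (auto intro!: derivative_eq_intros)
    apply (rule ext)
    apply (simp add: field_simps power3_eq_cube divide_simps)
    done
qed

lemma d_KA:
  assumes "(a,b) \<in> Aset"
  shows "((\<lambda>p. KA (fst p) (snd p)) has_derivative (\<lambda>h. dKf a b (fst h) (snd h))) (at (a,b))"
proof -
  note f = A_facts[OF assms]
  have e: "(wA a b)^2 * (a^2+b^2) = 1" by (rule f(8))
  show ?thesis
    unfolding KA_def
    apply (rule has_derivative_eq_rhs)
     apply (rule derivative_eq_intros d_wA[OF assms] refl)+
    apply (rule ext)
    apply (simp add: dwf_def dKf_def)
    using e by algebra
qed

lemma idLA:
  fixes W S P Q a b h1 h2 :: real
  shows "W * ((P * (2 * h2 * b) - 2 * h1 * a * Q) * inverse S) / 2 - W ^ 3 * (a * h1 + b * h2) * S =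
     (- (a * W ^ 3 * S) - W * a * Q / S) * h1 + (W * b * P / S - b * W ^ 3 * S) * h2"
proof (cases "S = 0")
  case True then show ?thesis by simp
next
  case False then show ?thesis by (simp add: field_simps)
qed

lemma d_LA:
  assumes "(a,b) \<in> Aset"
  shows "((\<lambda>p. LA (fst p) (snd p)) has_derivative (\<lambda>h. dLf a b (fst h) (snd h))) (at (a,b))"
proof -
  note f = A_facts[OF assms]
  have M: "MA a b > 0" by (rule f(6))
  have M': "0 < (rr - (fst (a,b))^2) * ((snd (a,b))^2 - rr)" using M by (simp add: MA_def)
  show ?thesis
    unfolding LA_def MA_def
    apply (rule has_derivative_eq_rhs)
     apply (rule derivative_eq_intros d_wA[OF assms] refl M')+
    apply (rule ext)
    apply (simp add: dwf_def dLf_def La_def Lb_def MA_def)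
    apply (rule idLA)
    done
qed

lemma Psi_fun: "Psi = (\<lambda>p. ((x0 * LA (fst p) (snd p) - y0 * KA (fst p) (snd p))/rr,
   (y0 * LA (fst p) (snd p) + x0 * KA (fst p) (snd p))/rr, wA (fst p) (snd p)))"
  by (rule ext) (simp add: Psi_def case_prod_beta)

lemma d_Psi:
  assumes "p \<in> Aset"
  shows "(Psi has_derivative Psi' p) (at p)"
proof -
  obtain a b where p: "p = (a,b)" by (cases p) auto
  have rz: "rr \<noteq> 0" using rr_pos by simp
    have ab: "(a,b) \<in> Aset" using assms p by simp
    show ?thesis
    unfolding Psi_fun p
    apply (rule has_derivative_eq_rhs)
     apply (rule derivative_eq_intros d_wA[OF ab] d_KA[OF ab] d_LA[OF ab] refl rz)+
    apply (rule ext)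
    apply (simp add: Psi'_def)
    done
qed

lemma inj_Psi':
  assumes "p \<in> Aset"
  shows "inj (Psi' p)"
proof (rule injI)
  obtain a b where p: "p = (a,b)" by (cases p) auto
  note f = A_facts[OF assms[unfolded p]]
  fix x y assume h: "Psi' p x = Psi' p y"
  define d1 where "d1 = fst x - fst y"
  define d2 where "d2 = snd x - snd y"
  define w where "w = wA a b"
  have wp: "w > 0" using f by (simp add: w_def)
  have e3: "dwf a b (fst x) (snd x) = dwf a b (fst y) (snd y)" using h by (simp add: Psi'_def p)
  have e1: "x0 * dLf a b (fst x) (snd x) - y0 * dKf a b (fst x) (snd x) = x0 * dLf a b (fst y) (snd y) - y0 * dKf a b (fst y) (snd y)"
   and e2: "y0 * dLf a b (fst x) (snd x) + x0 * dKf a b (fst x) (snd x) = y0 * dLf a b (fst y) (snd y) + x0 * dKf a b (fst y) (snd y)"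
    using h rr_pos by (simp_all add: Psi'_def p)
  have "rr * dKf a b (fst x) (snd x) = rr * dKf a b (fst y) (snd y)"
  proof -
    have "rr * dKf a b (fst x) (snd x) = x0 * (y0 * dLf a b (fst x) (snd x) + x0 * dKf a b (fst x) (snd x))
        - y0 * (x0 * dLf a b (fst x) (snd x) - y0 * dKf a b (fst x) (snd x))"
      by (simp add: rr_def algebra_simps power2_eq_square)
    also have "\<dots> = x0 * (y0 * dLf a b (fst y) (snd y) + x0 * dKf a b (fst y) (snd y))
        - y0 * (x0 * dLf a b (fst y) (snd y) - y0 * dKf a b (fst y) (snd y))" using e1 e2 by simp
    also have "\<dots> = rr * dKf a b (fst y) (snd y)"
      by (simp add: rr_def algebra_simps power2_eq_square)
    finally show ?thesis .
  qed
  then have "rr * w^3 * (b^3 * d1 + a^3 * d2) = 0"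
    by (simp add: dKf_def d1_def d2_def w_def[symmetric] algebra_simps)
  then have k: "b^3 * d1 + a^3 * d2 = 0" using rr_pos wp by simp
  have "w^3 * (a * d1 + b * d2) = 0" using e3
    by (simp add: dwf_def d1_def d2_def w_def[symmetric] algebra_simps)
  then have l: "a * d1 + b * d2 = 0" using wp by simp
  have "(a^4 - b^4) * d2 = 0"
  proof -
    have "(a^4 - b^4) * d2 = a * (b^3 * d1 + a^3 * d2) - b^3 * (a * d1 + b * d2)"
      by (simp add: algebra_simps power2_eq_square power3_eq_cube power4_eq_xxxx)
    then show ?thesis using k l by simp
  qed
  moreover have "a^4 < b^4" using f by (simp add: power_strict_mono)
  ultimately have "d2 = 0" by simp
  then have "d1 = 0" using l f by simp
  then show "x = y" using \<open>d2 = 0\<close> by (simp add: d1_def d2_def prod_eq_iff)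
qed

lemma Aset_ne: "(a,b) \<in> Aset \<Longrightarrow> a \<noteq> 0 \<and> rr \<noteq> a^2 \<and> b^2 \<noteq> rr \<and> rr \<noteq> 0"
  using A_facts[of a b] rr_pos by force

lemma cont_Psi': "continuous_on Aset (\<lambda>p. Psi' p (1,0))" "continuous_on Aset (\<lambda>p. Psi' p (0,1))"
  unfolding Psi'_def dLf_def dKf_def dwf_def La_def Lb_def wA_def MA_def
  by (auto intro!: continuous_intros dest: Aset_ne)

end

lemma lift_deriv:
  fixes h X Y :: "real \<Rightarrow> real"
  assumes U: "open U" "s0 \<in> U" and hc: "continuous_on U h"
    and rel: "\<And>s. s \<in> U \<Longrightarrow> X s = sqrt ((X s)^2 + (Y s)^2) * cos (h s) \<and> Y s = sqrt ((X s)^2 + (Y s)^2) * sin (h s)"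
    and Rp: "\<And>s. s \<in> U \<Longrightarrow> (X s)^2 + (Y s)^2 > 0"
    and dX: "(X has_real_derivative X') (at s0)" and dY: "(Y has_real_derivative Y') (at s0)"
  shows "(h has_real_derivative (X s0 * Y' - Y s0 * X') / ((X s0)^2 + (Y s0)^2)) (at s0)"
proof -
  define c where "c = cos (h s0)"
  define sn where "sn = sin (h s0)"
  define R where "R s = sqrt ((X s)^2 + (Y s)^2)" for s
  define Xt where "Xt s = X s * c + Y s * sn" for s
  define Yt where "Yt s = Y s * c - X s * sn" for s
  have XR: "X s = R s * cos (h s)" and YR: "Y s = R s * sin (h s)" if "s \<in> U" for s
    using rel[OF that] unfolding R_def by simp_all
  have Xt: "Xt s = R s * cos (h s - h s0)" and Yt: "Yt s = R s * sin (h s - h s0)" if "s \<in> U" for s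
    unfolding Xt_def Yt_def c_def sn_def XR[OF that] YR[OF that] cos_diff sin_diff
    by (simp_all add: algebra_simps)
  have "\<exists>d>0. \<forall>s\<in>U. dist s s0 < d \<longrightarrow> dist (h s) (h s0) < pi/2"
    using hc U(2) pi_half_gt_zero unfolding continuous_on_iff by blast
  then obtain d where d: "d > 0" "\<And>s. s \<in> U \<Longrightarrow> dist s s0 < d \<Longrightarrow> dist (h s) (h s0) < pi/2"
    by blast
  define V where "V = U \<inter> ball s0 d"
  have V: "open V" "s0 \<in> V" using U d by (auto simp: V_def)
  have eq: "h s = h s0 + arctan (Yt s / Xt s)" if "s \<in> V" for s
  proof -
    have sU: "s \<in> U" and ds: "dist s s0 < d" using that by (auto simp: V_def dist_commute)
    have b: "\<bar>h s - h s0\<bar> < pi/2" using d(2)[OF sU ds] by (simp add: dist_real_def)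
    have b': "- (pi/2) < h s - h s0" "h s - h s0 < pi/2" using b by linarith+
    have cp: "cos (h s - h s0) > 0" using b' by (intro cos_gt_zero_pi) auto
    have Rp': "R s > 0" using Rp[OF sU] by (simp add: R_def)
    have "Yt s / Xt s = tan (h s - h s0)" using Xt[OF sU] Yt[OF sU] Rp' cp by (simp add: tan_def)
    then have "arctan (Yt s / Xt s) = h s - h s0" using b' by (simp add: arctan_tan)
    then show ?thesis by simp
  qed
  have R0: "R s0 > 0" using Rp[OF U(2)] by (simp add: R_def)
  have Xt0: "Xt s0 = R s0" and Yt0: "Yt s0 = 0" using Xt[OF U(2)] Yt[OF U(2)] by simp_all
  have X0: "X s0 = R s0 * c" and Y0: "Y s0 = R s0 * sn" using XR[OF U(2)] YR[OF U(2)] by (simp_all add: c_def sn_def)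
  have R2: "(X s0)^2 + (Y s0)^2 = (R s0)^2" using Rp[OF U(2)] by (simp add: R_def)
  have dXt: "(Xt has_real_derivative X' * c + Y' * sn) (at s0)" unfolding Xt_def
    using dX dY by (auto intro!: derivative_eq_intros)
  have dYt: "(Yt has_real_derivative Y' * c - X' * sn) (at s0)" unfolding Yt_def
    using dX dY by (auto intro!: derivative_eq_intros)
  have "((\<lambda>s. h s0 + arctan (Yt s / Xt s)) has_real_derivative
      (1 / (1 + (Yt s0 / Xt s0)^2)) * (((Y' * c - X' * sn) * Xt s0 - Yt s0 * (X' * c + Y' * sn)) / (Xt s0 * Xt s0))) (at s0)"
    using R0 Xt0 Yt0
    by (auto intro!: derivative_eq_intros dXt dYt simp: power2_eq_square)
  moreover have "(1 / (1 + (Yt s0 / Xt s0)^2)) * (((Y' * c - X' * sn) * Xt s0 - Yt s0 * (X' * c + Y' * sn)) / (Xt s0 * Xt s0))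
      = (X s0 * Y' - Y s0 * X') / ((X s0)^2 + (Y s0)^2)"
  proof -
    have cs: "c^2 + sn^2 = 1" by (simp add: c_def sn_def)
    have "c * (c * (R s0 * R s0)) + sn * (sn * (R s0 * R s0)) = (c^2 + sn^2) * (R s0 * R s0)"
      by (simp add: algebra_simps power2_eq_square)
    then have eqR: "c * (c * (R s0 * R s0)) + sn * (sn * (R s0 * R s0)) = R s0 * R s0" using cs by simp
    show ?thesis unfolding Xt0 Yt0 R2 X0 Y0 using R0 eqR by (simp add: field_simps power2_eq_square)
  qed
  ultimately have "((\<lambda>s. h s0 + arctan (Yt s / Xt s)) has_real_derivative
      (X s0 * Y' - Y s0 * X') / ((X s0)^2 + (Y s0)^2)) (at s0)" by simp
  then show ?thesis
    by (rule has_field_derivative_transform_within_open[OF _ V]) (simp add: eq)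
qed

lemma ring_det:
  fixes P Q S t wa wb ca cb ka kb :: real
  shows "(P*t*wa + ca*S)*(Q*t*wb + kb*S) - (Q*t*wa + ka*S)*(P*t*wb + cb*S)
     = t*S*(P*(wa*kb - wb*ka) + Q*(ca*wb - wa*cb)) + S^2*(ca*kb - ka*cb)"
  by (simp add: algebra_simps power2_eq_square)

lemma alg_I1:
  fixes a b p q S C rr w t :: real
  assumes "p > 0" "q > 0" "p^2+q^2=1" "rr = a^2 + (b^2-a^2)*p^2" "rr > 0"
  shows "rr * ((((-S + (b^2-a^2)*p*q/rr * C) * t * (-a*w^3) + (-a*q/(rr*p)) * S)) * ((a*b/rr) * C * t * (-b*w^3) + a/rr * S)
     - ((a*b/rr) * C * t * (-a*w^3) + b/rr * S) * ((-S + (b^2-a^2)*p*q/rr * C) * t * (-b*w^3) + (b*p/(rr*q)) * S))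
   = S * ((w*t) * w^2 * (C * (a^2*p^2+b^2*q^2) - (b^2-a^2)*p*q*S) - S) / (p*q)"
proof -
  have pq: "p \<noteq> 0" "q \<noteq> 0" "rr \<noteq> 0" using assms by auto
  have rq: "rr = a^2*q^2 + b^2*p^2"
  proof -
    have "a^2*(p^2+q^2) = a^2" using assms(3) by simp
    then have e: "a^2*p^2 + a^2*q^2 = a^2" by (simp add: distrib_left)
    have "rr = a^2 + b^2*p^2 - a^2*p^2" using assms(4) by (simp add: algebra_simps)
    then show ?thesis using e by linarith
  qed
  define P where "P = -S + (b^2-a^2)*p*q/rr * C"
  define Q where "Q = (a*b/rr) * C"
  have c1: "(-a*w^3)*(a/rr) - (-b*w^3)*(b/rr) = w^3*(b^2-a^2)/rr"
    using pq by (simp add: field_simps power2_eq_square)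
  have c2: "(-a*q/(rr*p))*(-b*w^3) - (-a*w^3)*(b*p/(rr*q)) = a*b*w^3/(rr*p*q)"
  proof -
    have "(-a*q/(rr*p))*(-b*w^3) - (-a*w^3)*(b*p/(rr*q)) = a*b*w^3*(p^2+q^2)/(rr*p*q)"
      using pq by (simp add: field_simps power2_eq_square)
    then show ?thesis using assms(3) by simp
  qed
  have c3: "(-a*q/(rr*p))*(a/rr) - (b/rr)*(b*p/(rr*q)) = -1/(rr*p*q)"
  proof -
    have "(-a*q/(rr*p))*(a/rr) - (b/rr)*(b*p/(rr*q)) = -(a^2*q^2+b^2*p^2)/(rr*rr*p*q)"
      using pq by (simp add: field_simps power2_eq_square)
    then show ?thesis unfolding rq[symmetric] using pq by simp
  qed
  have c4: "(b^2-a^2)^2*p^2*q^2 + a^2*b^2 = rr*(a^2*p^2+b^2*q^2)"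
  proof -
    have "rr*(a^2*p^2+b^2*q^2) = (a^2*q^2 + b^2*p^2)*(a^2*p^2+b^2*q^2)" by (simp add: rq)
    also have "\<dots> = (b^2-a^2)^2*p^2*q^2 + a^2*b^2*(p^2+q^2)^2"
      by algebra
    finally show ?thesis using assms(3) by simp
  qed
  have sub: "(b^2-a^2)*p*q*P + Q*a*b = C * (a^2*p^2+b^2*q^2) - (b^2-a^2)*p*q*S"
  proof -
    have "(b^2-a^2)*p*q*P + Q*a*b = (C*((b^2-a^2)^2*p^2*q^2 + a^2*b^2) - (b^2-a^2)*p*q*S*rr)/rr"
      unfolding P_def Q_def using pq by (simp add: field_simps power2_eq_square)
    also have "\<dots> = C * (a^2*p^2+b^2*q^2) - (b^2-a^2)*p*q*S" unfolding c4 using pq by (simp add: field_simps)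
    finally show ?thesis .
  qed
  have "rr * ((P * t * (-a*w^3) + (-a*q/(rr*p)) * S) * (Q * t * (-b*w^3) + a/rr * S)
     - (Q * t * (-a*w^3) + b/rr * S) * (P * t * (-b*w^3) + (b*p/(rr*q)) * S))
     = rr * (t*S*(P*(w^3*(b^2-a^2)/rr) + Q*(a*b*w^3/(rr*p*q))) + S^2*(-1/(rr*p*q)))"
    unfolding ring_det c1 c2 c3 by simp
  also have "\<dots> = S * (t * w^3 * ((b^2-a^2)*p*q*P + Q*a*b) - S) / (p*q)"
    using pq by (simp add: field_simps power2_eq_square)
  also have "\<dots> = S * (t * w^3 * (C * (a^2*p^2+b^2*q^2) - (b^2-a^2)*p*q*S) - S) / (p*q)"
    using sub by simp
  also have "\<dots> = S * ((w*t) * w^2 * (C * (a^2*p^2+b^2*q^2) - (b^2-a^2)*p*q*S) - S) / (p*q)"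
    by (simp add: power3_eq_cube power2_eq_square mult.commute mult.left_commute)
  finally show ?thesis unfolding P_def Q_def .
qed

lemma alg_I2:
  fixes a b p q S C w t :: real
  assumes "p > 0" "q > 0" "p^2+q^2=1"
  shows "w^3 * t * ((q/p * b^2 - p/q * a^2) * (S*q + C*p) * (C*q - S*p) + a^2 * (S*q + C*p)^2 - b^2 * (C*q - S*p)^2)
     + 2 * (S*q + C*p) * (C*q - S*p) - p/q * (C*q - S*p)^2 - q/p * (S*q + C*p)^2
   = S * ((w*t) * w^2 * (C * (a^2*p^2+b^2*q^2) - (b^2-a^2)*p*q*S) - S) / (p*q)"
proof -
  have pq: "p \<noteq> 0" "q \<noteq> 0" using assms by auto
  define sA where "sA = S*q + C*p"
  define cA where "cA = C*q - S*p"
  have L: "(q^2*b^2 - p^2*a^2)* sA * cA + p*q*(a^2* sA^2 - b^2* cA^2)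
      = S*(C*(a^2*p^2+b^2*q^2) - (b^2-a^2)*p*q*S)*(p^2+q^2)"
    unfolding sA_def cA_def by algebra
  have N: "2 * p * q * sA * cA - p^2 * cA^2 - q^2 * sA^2 = - ((S * (p^2 + q^2))^2)"
    unfolding sA_def cA_def by algebra
  define al where "al = q/p"
  define be where "be = p/q"
  have al: "p*q*al = q^2" and be: "p*q*be = p^2" using pq by (simp_all add: al_def be_def power2_eq_square)
  define LHS where "LHS = w^3 * t * ((al * b^2 - be * a^2) * sA * cA + a^2 * sA^2 - b^2 * cA^2)
     + 2 * sA * cA - be * cA^2 - al * sA^2"
  have "(p*q) * LHS = w^3*t*(((p*q*al)*b^2 - (p*q*be)*a^2)* sA * cA + p*q*(a^2* sA^2 - b^2* cA^2))
       + (2*p*q* sA * cA - (p*q*be)* cA^2 - (p*q*al)* sA^2)"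
    unfolding LHS_def by algebra
  also have "\<dots> = w^3*t*((q^2*b^2 - p^2*a^2)* sA * cA + p*q*(a^2* sA^2 - b^2* cA^2))
       + (2*p*q* sA * cA - p^2* cA^2 - q^2* sA^2)" unfolding al be ..
  also have "\<dots> = S * ((w*t) * w^2 * (C * (a^2*p^2+b^2*q^2) - (b^2-a^2)*p*q*S) - S)"
    unfolding L N assms(3) by algebra
  finally have "LHS = S * ((w*t) * w^2 * (C * (a^2*p^2+b^2*q^2) - (b^2-a^2)*p*q*S) - S) / (p*q)"
    using pq by (simp add: field_simps)
  then show ?thesis unfolding LHS_def al_def be_def sA_def cA_def .
qed


lemma tcos_lt_sin:
  fixes x :: real
  assumes "0 < x" "x \<le> pi"
  shows "x * cos x < sin x"
proof -
  define f where "f y = sin y - y * cos y" for y :: real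
  have d: "\<And>y. 0 \<le> y \<Longrightarrow> y \<le> x \<Longrightarrow> DERIV f y :> y * sin y"
    unfolding f_def by (auto intro!: derivative_eq_intros)
  obtain z where z: "0 < z" "z < x" "f x - f 0 = (x - 0) * (z * sin z)"
    using MVT2[OF assms(1) d] by blast
  have "sin z > 0" using z assms by (intro sin_gt_zero) auto
  then have "f x - f 0 > 0" using z assms by simp
  then show ?thesis by (simp add: f_def)
qed

lemma E_neg:
  fixes x k B :: real
  assumes "0 < x" "x < pi" "0 \<le> k" "k < 1" "0 \<le> B"
  shows "x * (k * cos x - B * sin x) - sin x < 0"
proof -
  have S: "sin x > 0" using assms by (intro sin_gt_zero) auto
  have "x * B * sin x \<ge> 0" using assms S by simp
  moreover have "x * (k * cos x) < sin x"
  proof (cases "cos x \<le> 0")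
    case True
    then have "k * cos x \<le> 0" using assms by (simp add: mult_nonneg_nonpos)
    then have "x * (k * cos x) \<le> 0" using assms by (simp add: mult_nonneg_nonpos)
    then show ?thesis using S by linarith
  next
    case False
    then have "k * cos x \<le> cos x" using assms by (simp add: mult_le_cancel_right1)
    then have "x * (k * cos x) \<le> x * cos x" using assms by (intro mult_left_mono) auto
    moreover have "x * cos x < sin x" using tcos_lt_sin[of x] assms by simp
    ultimately show ?thesis by linarith
  qed
  ultimately show ?thesis by (simp add: algebra_simps)
qed

lemma alg_J:
  fixes X Y Xa Ya Xb Yb R :: real
  assumes "R > 0" "R^2 = X^2 + Y^2"
  shows "((X*Xa+Y*Ya)/R)*((X*Yb - Y*Xb)/(X^2+Y^2)) - ((X*Xb+Y*Yb)/R)*((X*Ya - Y*Xa)/(X^2+Y^2))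
     = (Xa*Yb - Ya*Xb)/R"
proof -
  have nz: "X^2 + Y^2 \<noteq> 0" using assms by (metis less_irrefl zero_less_power2)
  have "((X*Xa+Y*Ya)/R)*((X*Yb - Y*Xb)/(X^2+Y^2)) - ((X*Xb+Y*Yb)/R)*((X*Ya - Y*Xa)/(X^2+Y^2))
     = ((X*Xa+Y*Ya)*(X*Yb - Y*Xb) - (X*Xb+Y*Yb)*(X*Ya - Y*Xa))/(R*(X^2+Y^2))"
    by (simp only: times_divide_times_eq) (simp only: diff_divide_distrib)
  also have "(X*Xa+Y*Ya)*(X*Yb - Y*Xb) - (X*Xb+Y*Yb)*(X*Ya - Y*Xa) = (X^2+Y^2)*(Xa*Yb - Ya*Xb)"
    by algebra
  also have "(X^2+Y^2)*(Xa*Yb - Ya*Xb)/(R*(X^2+Y^2)) = (Xa*Yb - Ya*Xb)/R"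
    by (metis mult.commute nonzero_mult_divide_mult_cancel_left nz)
  finally show ?thesis .
qed

context ctx begin

definition "Xe a b t = x0 * G1 a b t - y0 * G2 a b t"
definition "Ye a b t = y0 * G1 a b t + x0 * G2 a b t"

lemma traj_A:
  assumes "(a,b) \<in> Aset"
  shows "normal_traj (x0,y0,z0) (inv_into Sset Phi (a,b)) t =
     (Xe a b t, Ye a b t, snd (snd (traj (Psi (a,b)) t)))"
proof -
  have w: "snd (snd (Psi (a,b))) \<noteq> 0" using A_facts[OF assms] by (simp add: Psi_def)
  show ?thesis unfolding inv_eq[OF assms] normal_traj_eq'[OF w]
    using traj_Psi[OF assms, of t] by (simp add: Xe_def Ye_def prod_eq_iff)
qed

lemma R_A:
  assumes "(a,b) \<in> Aset"
  shows "cyl_r (normal_traj (x0,y0,z0) (inv_into Sset Phi (a,b)) t) = sqrt ((Xe a b t)^2 + (Ye a b t)^2)"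
  unfolding traj_A[OF assms] by (simp add: cyl_r_def)

lemma XY_pos:
  assumes "(a,b) \<in> Aset"
  shows "(Xe a b t)^2 + (Ye a b t)^2 > 0"
proof -
  note f = A_facts[OF assms]
  have "(Xe a b t)^2 + (Ye a b t)^2 = a^2 + (b^2-a^2) * (sin (wA a b * t + ph a b))^2"
    using r2_Psi[OF assms] by (simp add: Xe_def Ye_def)
  moreover have "a^2 + (b^2-a^2) * (sin (wA a b * t + ph a b))^2 \<ge> a^2" using f by simp
  ultimately show ?thesis using f by (smt (verit) zero_less_power2)
qed

end

context ctx begin

definition "wa a b = - a * wA a b ^3"
definition "wb a b = - b * wA a b ^3"
definition "cca a b = - a * (b^2 - rr) / (rr * sqrt (MA a b))"
definition "ccb a b = b * (rr - a^2) / (rr * sqrt (MA a b))"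
definition "G1a a b t = (- sin (wA a b * t) + cc a b * cos (wA a b * t)) * t * wa a b + cca a b * sin (wA a b * t)"
definition "G2a a b t = kk a b * cos (wA a b * t) * t * wa a b + b/rr * sin (wA a b * t)"
definition "G1b a b t = (- sin (wA a b * t) + cc a b * cos (wA a b * t)) * t * wb a b + ccb a b * sin (wA a b * t)"
definition "G2b a b t = kk a b * cos (wA a b * t) * t * wb a b + a/rr * sin (wA a b * t)"

lemma d_wA_a:
  assumes "(a,b) \<in> Aset"
  shows "((\<lambda>a'. wA a' b) has_real_derivative wa a b) (at a)"
proof -
  have s: "a^2 + b^2 > 0" using A_facts[OF assms] by (simp add: add_pos_nonneg)
  have s2: "a^2 * sqrt (a^2+b^2) + b^2 * sqrt (a^2+b^2) \<noteq> 0"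
  proof -
    have "(a^2 + b^2) * sqrt (a^2+b^2) > 0" using s by simp
    then show ?thesis by (simp add: algebra_simps)
  qed
  show ?thesis unfolding wA_def wa_def
    using s s2 by (auto intro!: derivative_eq_intros simp: field_simps power3_eq_cube divide_simps)
qed

lemma d_wA_b:
  assumes "(a,b) \<in> Aset"
  shows "((\<lambda>b'. wA a b') has_real_derivative wb a b) (at b)"
proof -
  have s: "a^2 + b^2 > 0" using A_facts[OF assms] by (simp add: add_pos_nonneg)
  have s2: "a^2 * sqrt (a^2+b^2) + b^2 * sqrt (a^2+b^2) \<noteq> 0"
  proof -
    have "(a^2 + b^2) * sqrt (a^2+b^2) > 0" using s by simp
    then show ?thesis by (simp add: algebra_simps)
  qed
  show ?thesis unfolding wA_def wb_def
    using s s2 by (auto intro!: derivative_eq_intros simp: field_simps power3_eq_cube divide_simps)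
qed

lemma d_cc_a:
  assumes "(a,b) \<in> Aset"
  shows "((\<lambda>a'. cc a' b) has_real_derivative cca a b) (at a)"
proof -
  have M: "(rr - a^2) * (b^2 - rr) > 0" using A_facts(6)[OF assms] by (simp add: MA_def)
  have rz: "rr \<noteq> 0" using rr_pos by simp
  show ?thesis unfolding cc_def cca_def MA_def
    using M rz by (auto intro!: derivative_eq_intros simp: field_simps)
qed

lemma d_cc_b:
  assumes "(a,b) \<in> Aset"
  shows "((\<lambda>b'. cc a b') has_real_derivative ccb a b) (at b)"
proof -
  have M: "(rr - a^2) * (b^2 - rr) > 0" using A_facts(6)[OF assms] by (simp add: MA_def)
  have rz: "rr \<noteq> 0" using rr_pos by simp
  show ?thesis unfolding cc_def ccb_def MA_def
    using M rz by (auto intro!: derivative_eq_intros simp: field_simps)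
qed

lemma d_kk_a: "((\<lambda>a'. kk a' b) has_real_derivative b/rr) (at a)"
  unfolding kk_def using rr_pos by (auto intro!: derivative_eq_intros)
lemma d_kk_b: "((\<lambda>b'. kk a b') has_real_derivative a/rr) (at b)"
  unfolding kk_def using rr_pos by (auto intro!: derivative_eq_intros)

lemma d_G1_a:
  assumes "(a,b) \<in> Aset"
  shows "((\<lambda>a'. G1 a' b t) has_real_derivative G1a a b t) (at a)"
  unfolding G1_def G1a_def
  by (auto intro!: derivative_eq_intros d_wA_a[OF assms] d_cc_a[OF assms] simp: algebra_simps)

lemma d_G2_a:
  assumes "(a,b) \<in> Aset"
  shows "((\<lambda>a'. G2 a' b t) has_real_derivative G2a a b t) (at a)"
  unfolding G2_def G2a_def
  by (auto intro!: derivative_eq_intros d_wA_a[OF assms] d_kk_a simp: algebra_simps)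

lemma d_G1_b:
  assumes "(a,b) \<in> Aset"
  shows "((\<lambda>b'. G1 a b' t) has_real_derivative G1b a b t) (at b)"
  unfolding G1_def G1b_def
  by (auto intro!: derivative_eq_intros d_wA_b[OF assms] d_cc_b[OF assms] simp: algebra_simps)

lemma d_G2_b:
  assumes "(a,b) \<in> Aset"
  shows "((\<lambda>b'. G2 a b' t) has_real_derivative G2b a b t) (at b)"
  unfolding G2_def G2b_def
  by (auto intro!: derivative_eq_intros d_wA_b[OF assms] d_kk_b simp: algebra_simps)

end

context ctx begin

definition "EE a b t = (let w = wA a b; p = sin (ph a b); q = cos (ph a b); S = sin (w*t); C = cos (w*t) in
   S * ((w*t) * w^2 * (C * (a^2*p^2+b^2*q^2) - (b^2-a^2)*p*q*S) - S) / (p*q))"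

lemma pq_facts:
  assumes "(a,b) \<in> Aset"
  shows "(sin (ph a b))^2 + (cos (ph a b))^2 = 1"
    "b^2 - rr = (b^2-a^2) * (cos (ph a b))^2" "rr - a^2 = (b^2-a^2) * (sin (ph a b))^2"
proof -
  note p = ph_facts[OF assms]
  show 1: "(sin (ph a b))^2 + (cos (ph a b))^2 = 1" by simp
  show "rr - a^2 = (b^2-a^2) * (sin (ph a b))^2" using p(3) by simp
  have c2: "(cos (ph a b))^2 = 1 - (sin (ph a b))^2" by (rule cos_squared_eq)
  show "b^2 - rr = (b^2-a^2) * (cos (ph a b))^2" unfolding c2 using p(3) by (simp add: algebra_simps)
qed

lemma det_eq:
  assumes "(a,b) \<in> Aset"
  shows "rr * (G1a a b t * G2b a b t - G2a a b t * G1b a b t) = EE a b t"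
proof -
  note p = ph_facts[OF assms] and f = A_facts[OF assms] and pq = pq_facts[OF assms]
  define P where "P = sin (ph a b)"
  define Q where "Q = cos (ph a b)"
  have P: "P > 0" "Q > 0" "P^2 + Q^2 = 1" using p pq by (simp_all add: P_def Q_def)
  have sM: "sqrt (MA a b) = (b^2-a^2)*P*Q" using p(6) by (simp add: P_def Q_def)
  have abn: "b^2 - a^2 \<noteq> 0" using f by simp
  have ccv: "cc a b = (b^2-a^2)*P*Q/rr" by (simp add: cc_def sM)
  have kkv: "kk a b = a*b/rr" by (simp add: kk_def)
  have ccav: "cca a b = -a*Q/(rr*P)"
    unfolding cca_def sM pq(2) Q_def[symmetric] using P abn rr_pos by (simp add: field_simps power2_eq_square)
  have ccbv: "ccb a b = b*P/(rr*Q)"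
    unfolding ccb_def sM pq(3) P_def[symmetric] using P abn rr_pos by (simp add: field_simps power2_eq_square)
  show ?thesis
    unfolding G1a_def G2a_def G1b_def G2b_def ccv kkv ccav ccbv wa_def wb_def EE_def Let_def
      P_def[symmetric] Q_def[symmetric]
    using alg_I1[where a=a and b=b and p=P and q=Q and S="sin (wA a b * t)" and C="cos (wA a b * t)" and rr=rr and w="wA a b" and t=t, OF P p(3)[folded P_def] rr_pos]
    by (simp add: mult.assoc)
qed

lemma bracket_eq:
  assumes "(a,b) \<in> Aset"
  shows "Dexpr (sqrt rr) a b t r = (1/r) * EE a b t"
proof -
  note p = ph_facts[OF assms] and pq = pq_facts[OF assms]
  define P where "P = sin (ph a b)"
  define Q where "Q = cos (ph a b)"
  have P: "P > 0" "Q > 0" "P^2 + Q^2 = 1" using p pq by (simp_all add: P_def Q_def)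
  have w0: "1 / sqrt (a^2+b^2) = wA a b" by (simp add: wA_def)
  have ss: "sin (wA a b * t + ph a b) = sin (wA a b * t) * Q + cos (wA a b * t) * P"
    by (simp add: sin_add P_def Q_def)
  have cs: "cos (wA a b * t + ph a b) = cos (wA a b * t) * Q - sin (wA a b * t) * P"
    by (simp add: cos_add P_def Q_def)
  have tn: "tan (ph a b) = P/Q" and ct: "cot (ph a b) = Q/P" by (simp_all add: tan_def cot_def P_def Q_def)
  show ?thesis
    unfolding Dexpr_def Let_def phase_eq[OF assms] w0 ss cs tn ct EE_def
      P_def[symmetric] Q_def[symmetric]
    using alg_I2[where a=a and b=b and p=P and q=Q and S="sin (wA a b * t)" and C="cos (wA a b * t)" and w="wA a b" and t=t, OF P]
    by (simp add: mult.assoc)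
qed

lemma EE_zero: "(a,b) \<in> Aset \<Longrightarrow> EE a b (pi / wA a b) = 0"
  using A_facts[of a b] by (simp add: EE_def Let_def)

lemma EE_neg:
  assumes "(a,b) \<in> Aset" "0 < t" "t < pi / wA a b"
  shows "EE a b t < 0"
proof -
  note p = ph_facts[OF assms(1)] and f = A_facts[OF assms(1)] and pq = pq_facts[OF assms(1)]
  define P where "P = sin (ph a b)"
  define Q where "Q = cos (ph a b)"
  define w where "w = wA a b"
  have P: "P > 0" "Q > 0" "P^2 + Q^2 = 1" using p pq by (simp_all add: P_def Q_def)
  have w: "w > 0" "w^2 * (a^2+b^2) = 1" using f by (simp_all add: w_def)
  define x where "x = w * t"
  have x: "0 < x" "x < pi" using assms w by (simp_all add: x_def w_def field_simps)
  define k where "k = w^2 * (a^2*P^2+b^2*Q^2)"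
  define B where "B = w^2 * ((b^2-a^2)*P*Q)"
  have k0: "0 \<le> k" by (simp add: k_def)
  have P2: "P^2 < 1" "Q^2 < 1" using P by (smt (verit) zero_less_power2)+
  have "a^2*P^2 + b^2*Q^2 < a^2 + b^2"
  proof -
    have "a^2*P^2 < a^2*1" using f P2 by (intro mult_strict_left_mono) auto
    moreover have "b^2*Q^2 < b^2*1" using f P2 by (intro mult_strict_left_mono) auto
    ultimately show ?thesis by simp
  qed
  then have k1: "k < 1" unfolding k_def using w by (metis mult_strict_left_mono zero_less_power2 less_irrefl)
  have B0: "0 \<le> B" using f P by (simp add: B_def)
  have E: "x * (k * cos x - B * sin x) - sin x < 0" by (rule E_neg[OF x k0 k1 B0])
  have S: "sin x > 0" using x by (intro sin_gt_zero) auto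
  have eq: "EE a b t = sin x * (x * (k * cos x - B * sin x) - sin x) / (P*Q)"
    unfolding EE_def Let_def w_def[symmetric] P_def[symmetric] Q_def[symmetric] x_def[symmetric] k_def B_def
    by (simp add: algebra_simps)
  have "sin x * (x * (k * cos x - B * sin x) - sin x) < 0" using E S by (simp add: mult_pos_neg)
  then show ?thesis unfolding eq using P by (simp add: divide_neg_pos)
qed

end

context ctx begin

lemma convex_A: "convex Aset"
  unfolding Aset_def by (intro convex_Times) auto

lemma theta_exists: "\<exists>\<Theta>. angle_lift (x0,y0,z0) (inv_into Sset Phi) Aset \<Theta>"
proof -
  define F where "F z = Complex (Xe (fst (snd z)) (snd (snd z)) (fst z)) (Ye (fst (snd z)) (snd (snd z)) (fst z))"
    for z :: "real \<times> real \<times> real"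
  have F': "F = (\<lambda>z. complex_of_real (Xe (fst (snd z)) (snd (snd z)) (fst z)) + \<i> * complex_of_real (Ye (fst (snd z)) (snd (snd z)) (fst z)))"
    by (rule ext) (simp add: F_def Complex_eq)
  have cF: "continuous_on (UNIV \<times> Aset) F"
    unfolding F' Xe_def Ye_def G1_def G2_def cc_def kk_def wA_def MA_def
    by (auto intro!: continuous_intros dest: Aset_ne)
  have nz: "F z \<noteq> 0" if "z \<in> UNIV \<times> Aset" for z
  proof -
    obtain t a b where z: "z = (t,a,b)" by (cases z) auto
    have ab: "(a,b) \<in> Aset" using that z by simp
    show ?thesis using XY_pos[OF ab, of t] by (auto simp: F_def z complex_eq_iff)
  qed
  have co: "contractible ((UNIV::real set) \<times> Aset)"
  proof -
    have "convex ((UNIV::real set) \<times> Aset)" by (rule convex_Times, simp, rule convex_A)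
    from convex_imp_contractible[OF this] show ?thesis .
  qed
  obtain g where g: "continuous_on (UNIV \<times> Aset) g" "\<And>z. z \<in> UNIV \<times> Aset \<Longrightarrow> F z = exp (g z)"
    using continuous_logarithm_on_contractible[OF cF co nz] by blast
  define \<Theta> where "\<Theta> t a b = Im (g (t,(a,b)))" for t a b
  have "angle_lift (x0,y0,z0) (inv_into Sset Phi) Aset \<Theta>"
    unfolding angle_lift_def
  proof (intro conjI allI ballI)
    have "continuous_on (UNIV \<times> Aset) (\<lambda>z. Im (g z))" using g(1) by (intro continuous_intros)
    moreover have "(\<lambda>(t, p). \<Theta> t (fst p) (snd p)) = (\<lambda>z. Im (g z))"
      by (rule ext) (simp add: \<Theta>_def case_prod_beta)
    ultimately show "continuous_on (UNIV \<times> Aset) (\<lambda>(t, p). \<Theta> t (fst p) (snd p))" by simp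
  next
    fix t :: real and p assume p: "p \<in> Aset"
    obtain a b where ab: "p = (a,b)" by (cases p) auto
    have abA: "(a,b) \<in> Aset" using p ab by simp
    have z: "(t,(a,b)) \<in> UNIV \<times> Aset" using abA by simp
    have e: "Complex (Xe a b t) (Ye a b t) = exp (g (t,(a,b)))" using g(2)[OF z] by (simp add: F_def)
    have X: "Xe a b t = exp (Re (g (t,(a,b)))) * cos (\<Theta> t a b)"
      using arg_cong[OF e, of Re] by (simp add: Re_exp \<Theta>_def)
    have Y: "Ye a b t = exp (Re (g (t,(a,b)))) * sin (\<Theta> t a b)"
      using arg_cong[OF e, of Im] by (simp add: Im_exp \<Theta>_def)
    have N: "sqrt ((Xe a b t)^2 + (Ye a b t)^2) = exp (Re (g (t,(a,b))))"
    proof -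
      have "sqrt ((Xe a b t)^2 + (Ye a b t)^2) = norm (Complex (Xe a b t) (Ye a b t))"
        by (simp add: norm_complex_def)
      also have "\<dots> = norm (exp (g (t,(a,b))))" using e by simp
      also have "\<dots> = exp (Re (g (t,(a,b))))" by simp
      finally show ?thesis .
    qed
    show "case normal_traj (x0, y0, z0) (inv_into Sset Phi p) t of
         (x, y, z) \<Rightarrow>
           x = cyl_r (normal_traj (x0, y0, z0) (inv_into Sset Phi p) t) * cos (\<Theta> t (fst p) (snd p)) \<and>
           y = cyl_r (normal_traj (x0, y0, z0) (inv_into Sset Phi p) t) * sin (\<Theta> t (fst p) (snd p))"
      unfolding ab traj_A[OF abA] R_A[OF abA, unfolded traj_A[OF abA]] using X Y N
      by (simp add: traj_A[OF abA] cyl_r_def)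
  qed
  then show ?thesis by blast
qed

end

lemma aux2:
  fixes p q x y s :: real
  shows "(p * (2 * x) + q * (2 * y)) / (2 * s) = (x * p + y * q) / s"
proof (cases "s = 0")
  case True then show ?thesis by simp
next
  case False then show ?thesis by (simp add: field_simps)
qed

context ctx begin

lemma D_formula:
  assumes th: "angle_lift (x0,y0,z0) (inv_into Sset Phi) Aset \<Theta>" and ab: "(a,b) \<in> Aset"
  shows "\<exists>Ra Rb Ta Tb.
      ((\<lambda>a'. cyl_r (normal_traj (x0,y0,z0) (inv_into Sset Phi (a', b)) t)) has_real_derivative Ra) (at a) \<and>
      ((\<lambda>b'. cyl_r (normal_traj (x0,y0,z0) (inv_into Sset Phi (a, b')) t)) has_real_derivative Rb) (at b) \<and>
      ((\<lambda>a'. \<Theta> t a' b) has_real_derivative Ta) (at a) \<and>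
      ((\<lambda>b'. \<Theta> t a b') has_real_derivative Tb) (at b) \<and>
      Ra * Tb - Rb * Ta = Dexpr (sqrt rr) a b t (cyl_r (normal_traj (x0,y0,z0) (inv_into Sset Phi (a, b)) t))"
proof -
  define X where "X = Xe a b t"
  define Y where "Y = Ye a b t"
  define Xa where "Xa = x0 * G1a a b t - y0 * G2a a b t"
  define Ya where "Ya = y0 * G1a a b t + x0 * G2a a b t"
  define Xb where "Xb = x0 * G1b a b t - y0 * G2b a b t"
  define Yb where "Yb = y0 * G1b a b t + x0 * G2b a b t"
  define Rv where "Rv = sqrt (X^2 + Y^2)"
  define Ua where "Ua = {0<..<sqrt rr}"
  define Ub where "Ub = {sqrt rr<..}"
  have Ua: "open Ua" "a \<in> Ua" and Ub: "open Ub" "b \<in> Ub" using ab by (auto simp: Ua_def Ub_def Aset_def)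
  have inA: "a' \<in> Ua \<Longrightarrow> (a',b) \<in> Aset" "b' \<in> Ub \<Longrightarrow> (a,b') \<in> Aset" for a' b'
    using ab by (auto simp: Ua_def Ub_def Aset_def)
  have XY: "X^2 + Y^2 > 0" using XY_pos[OF ab] by (simp add: X_def Y_def)
  have XYne: "(Xe a b t)^2 + (Ye a b t)^2 \<noteq> 0" using XY unfolding X_def Y_def by linarith
  have Rv: "Rv > 0" "Rv^2 = X^2 + Y^2" using XY by (simp_all add: Rv_def)
  have dXa: "((\<lambda>a'. Xe a' b t) has_real_derivative Xa) (at a)"
    unfolding Xe_def Xa_def by (auto intro!: derivative_eq_intros d_G1_a[OF ab] d_G2_a[OF ab])
  have dYa: "((\<lambda>a'. Ye a' b t) has_real_derivative Ya) (at a)"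
    unfolding Ye_def Ya_def by (auto intro!: derivative_eq_intros d_G1_a[OF ab] d_G2_a[OF ab])
  have dXb: "((\<lambda>b'. Xe a b' t) has_real_derivative Xb) (at b)"
    unfolding Xe_def Xb_def by (auto intro!: derivative_eq_intros d_G1_b[OF ab] d_G2_b[OF ab])
  have dYb: "((\<lambda>b'. Ye a b' t) has_real_derivative Yb) (at b)"
    unfolding Ye_def Yb_def by (auto intro!: derivative_eq_intros d_G1_b[OF ab] d_G2_b[OF ab])
  have dRa0: "((\<lambda>a'. sqrt ((Xe a' b t)^2 + (Ye a' b t)^2)) has_real_derivative (X*Xa + Y*Ya)/Rv) (at a)"
    using XY XYne unfolding X_def Y_def Rv_def
    by (auto intro!: derivative_eq_intros dXa dYa simp: field_simps)
  have dRb0: "((\<lambda>b'. sqrt ((Xe a b' t)^2 + (Ye a b' t)^2)) has_real_derivative (X*Xb + Y*Yb)/Rv) (at b)"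
    using XY XYne unfolding X_def Y_def Rv_def
    by (auto intro!: derivative_eq_intros dXb dYb simp: field_simps)
  have dRa: "((\<lambda>a'. cyl_r (normal_traj (x0,y0,z0) (inv_into Sset Phi (a', b)) t)) has_real_derivative (X*Xa + Y*Ya)/Rv) (at a)"
    by (rule has_field_derivative_transform_within_open[OF dRa0 Ua]) (simp add: R_A inA)
  have dRb: "((\<lambda>b'. cyl_r (normal_traj (x0,y0,z0) (inv_into Sset Phi (a, b')) t)) has_real_derivative (X*Xb + Y*Yb)/Rv) (at b)"
    by (rule has_field_derivative_transform_within_open[OF dRb0 Ub]) (simp add: R_A inA)
  have thc: "continuous_on (UNIV \<times> Aset) (\<lambda>(t, p). \<Theta> t (fst p) (snd p))"
    using th unfolding angle_lift_def by (rule conjunct1)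
  have thr: "\<forall>t. \<forall>p\<in>Aset. case normal_traj (x0,y0,z0) (inv_into Sset Phi p) t of (x, y, z) \<Rightarrow>
          x = cyl_r (normal_traj (x0,y0,z0) (inv_into Sset Phi p) t) * cos (\<Theta> t (fst p) (snd p)) \<and>
          y = cyl_r (normal_traj (x0,y0,z0) (inv_into Sset Phi p) t) * sin (\<Theta> t (fst p) (snd p))"
    using th unfolding angle_lift_def by (rule conjunct2)
  have rel: "Xe a' b' t = sqrt ((Xe a' b' t)^2 + (Ye a' b' t)^2) * cos (\<Theta> t a' b') \<and>
             Ye a' b' t = sqrt ((Xe a' b' t)^2 + (Ye a' b' t)^2) * sin (\<Theta> t a' b')"
    if "(a',b') \<in> Aset" for a' b'
    using thr[rule_format, of "(a',b')" t, OF that] unfolding traj_A[OF that] R_A[OF that] by (simp only: cyl_r_def prod.case fst_conv snd_conv)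
  have cTa: "continuous_on Ua (\<lambda>a'. \<Theta> t a' b)"
  proof -
    have "continuous_on Ua (\<lambda>a'. (\<lambda>(t, p). \<Theta> t (fst p) (snd p)) (t, (a', b)))"
      by (rule continuous_on_compose2[OF thc]) (auto intro!: continuous_intros inA)
    then show ?thesis by simp
  qed
  have cTb: "continuous_on Ub (\<lambda>b'. \<Theta> t a b')"
  proof -
    have "continuous_on Ub (\<lambda>b'. (\<lambda>(t, p). \<Theta> t (fst p) (snd p)) (t, (a, b')))"
      by (rule continuous_on_compose2[OF thc]) (auto intro!: continuous_intros inA)
    then show ?thesis by simp
  qed
  have dTa: "((\<lambda>a'. \<Theta> t a' b) has_real_derivative (X * Ya - Y * Xa) / (X^2 + Y^2)) (at a)"
    using lift_deriv[OF Ua cTa, of "\<lambda>a'. Xe a' b t" "\<lambda>a'. Ye a' b t" Xa Ya] rel inA XY_pos dXa dYa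
    unfolding X_def Y_def by blast
  have dTb: "((\<lambda>b'. \<Theta> t a b') has_real_derivative (X * Yb - Y * Xb) / (X^2 + Y^2)) (at b)"
    using lift_deriv[OF Ub cTb, of "\<lambda>b'. Xe a b' t" "\<lambda>b'. Ye a b' t" Xb Yb] rel inA XY_pos dXb dYb
    unfolding X_def Y_def by blast
  have "((X*Xa + Y*Ya)/Rv) * ((X * Yb - Y * Xb) / (X^2 + Y^2)) - ((X*Xb + Y*Yb)/Rv) * ((X * Ya - Y * Xa) / (X^2 + Y^2))
      = (Xa*Yb - Ya*Xb)/Rv" by (rule alg_J[OF Rv])
  also have "Xa*Yb - Ya*Xb = rr * (G1a a b t * G2b a b t - G2a a b t * G1b a b t)"
    unfolding Xa_def Ya_def Xb_def Yb_def rr_def by algebra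
  also have "\<dots> = EE a b t" by (rule det_eq[OF ab])
  also have "EE a b t / Rv = Dexpr (sqrt rr) a b t (cyl_r (normal_traj (x0,y0,z0) (inv_into Sset Phi (a, b)) t))"
    unfolding bracket_eq[OF ab] R_A[OF ab] Rv_def X_def Y_def by simp
  finally show ?thesis using dRa dRb dTa dTb by blast
qed

end

lemma Dval_alg:
  fixes x0 y0 u v w s c rr :: real
  assumes "w \<noteq> 0" "s^2 + c^2 = 1" "rr = x0^2 + y0^2"
  shows "(s / w) * (rr * (1 + c^2 - s^2) / 2
   + (u^2+v^2) * (w * (1 - c^2 + s^2) - 2 * (w - s * c)) / (2 * w^3)
   + (x0 * u + y0 * v) * (2 * w * s * c - s^2) / w^2)
   - (- x0 * s + u * (w * c - s) / w^2) * (u * (w - s * c) / w^2 + x0 * s^2 / w)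
   - (- y0 * s + v * (w * c - s) / w^2) * (v * (w - s * c) / w^2 + y0 * s^2 / w)
   = (rr + x0 * u + y0 * v) * s / w + (u^2+v^2) * (s - w * c) / w^3"
proof -
  have c2: "c^2 = 1 - s^2" using assms(2) by simp
  have e: "1 + c^2 - s^2 = 2 - 2 * s^2" "1 - c^2 + s^2 = 2 * s^2" unfolding c2 by simp_all
  show ?thesis
    unfolding e assms(3) using assms(1)
    apply (simp add: field_simps)
    using assms(2) by algebra
qed

context ctx begin

definition "sg w = sin w / w"
definition "Xw u w = - x0 * sin w + u * (w * cos w - sin w) / w^2"
definition "Yw v w = - y0 * sin w + v * (w * cos w - sin w) / w^2"
definition "Zu u w = u * (w - sin w * cos w) / w^2 + x0 * (sin w)^2 / w"
definition "Zv v w = v * (w - sin w * cos w) / w^2 + y0 * (sin w)^2 / w"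
definition "Zw u v w = rr * (1 + (cos w)^2 - (sin w)^2) / 2
   + (u^2+v^2) * (w * (1 - (cos w)^2 + (sin w)^2) - 2 * (w - sin w * cos w)) / (2 * w^3)
   + (x0 * u + y0 * v) * (2 * w * sin w * cos w - (sin w)^2) / w^2"
definition "J p h = (let u = fst p; v = fst (snd p); w = snd (snd p) in
   (sg w * fst h + Xw u w * snd (snd h), sg w * fst (snd h) + Yw v w * snd (snd h),
    Zu u w * fst h + Zv v w * fst (snd h) + Zw u v w * snd (snd h)))"

lemma Exp_explicit:
  "((\<lambda>p. (Xf (fst p) (snd (snd p)) 1, Yf (fst (snd p)) (snd (snd p)) 1, Zf (fst p) (fst (snd p)) (snd (snd p)) 1))
     has_derivative J p) (at p)" if "snd (snd p) \<noteq> 0"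
proof -
  obtain u v w where p: "p = (u,v,w)" by (cases p) auto
  have w: "w \<noteq> 0" using that p by simp
  show ?thesis
    unfolding p Xf_def Yf_def Zf_def
    using w
    apply (auto intro!: derivative_eq_intros)
    apply (rule ext)
    apply (simp add: J_def sg_def Xw_def Yw_def Zu_def Zv_def Zw_def)
    apply (simp add: field_simps power2_eq_square power3_eq_cube power4_eq_xxxx)
    done
qed

lemma Dval:
  assumes "w \<noteq> 0"
  shows "sg w * Zw u v w - Xw u w * Zu u w - Yw v w * Zv v w
     = (rr + x0 * u + y0 * v) * sin w / w + (u^2+v^2) * (sin w - w * cos w) / w^3"
  unfolding sg_def Zw_def Xw_def Zu_def Yw_def Zv_def
  by (rule Dval_alg[OF assms sin_cos_squared_add rr_def])

lemma Exp_deriv: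
  assumes "snd (snd p) > 0"
  shows "(Exp (x0,y0,z0) has_derivative J p) (at p)"
proof -
  define Oset where "Oset = {p :: real \<times> real \<times> real. 0 < snd (snd p)}"
  have O: "open Oset" unfolding Oset_def by (intro open_Collect_less continuous_intros)
  have pO: "p \<in> Oset" using assms by (simp add: Oset_def)
  show ?thesis
  proof (rule has_derivative_transform_within_open[OF Exp_explicit O pO])
    show "snd (snd p) \<noteq> 0" using assms by simp
    fix x assume "x \<in> Oset"
    then have "snd (snd x) \<noteq> 0" by (simp add: Oset_def)
    then show "(Xf (fst x) (snd (snd x)) 1, Yf (fst (snd x)) (snd (snd x)) 1, Zf (fst x) (fst (snd x)) (snd (snd x)) 1)
        = Exp (x0, y0, z0) x"
      unfolding Exp_def by (simp add: normal_traj_eq' traj_def case_prod_beta)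
  qed
qed

lemma crit_iff:
  assumes "snd (snd p) > 0"
  shows "exp_critical (x0,y0,z0) p \<longleftrightarrow> \<not> surj (J p)"
  using Exp_deriv[OF assms] has_derivative_unique unfolding exp_critical_def by metis

lemma J_surj:
  assumes "sg w \<noteq> 0" "sg w * Zw u v w - Xw u w * Zu u w - Yw v w * Zv v w \<noteq> 0"
  shows "surj (J (u,v,w))"
proof (rule surjI)
  fix y :: "real \<times> real \<times> real"
  define s where "s = sg w"
  define D where "D = sg w * Zw u v w - Xw u w * Zu u w - Yw v w * Zv v w"
  define h3 where "h3 = (s * snd (snd y) - Zu u w * fst y - Zv v w * fst (snd y)) / D"
  define h1 where "h1 = (fst y - Xw u w * h3) / s"
  define h2 where "h2 = (fst (snd y) - Yw v w * h3) / s"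
  have s: "s \<noteq> 0" and D: "D \<noteq> 0" using assms by (simp_all add: s_def D_def)
  have e1: "s * h1 + Xw u w * h3 = fst y" using s by (simp add: h1_def)
  have e2: "s * h2 + Yw v w * h3 = fst (snd y)" using s by (simp add: h2_def)
  have "Zu u w * h1 + Zv v w * h2 + Zw u v w * h3 = (Zu u w * fst y + Zv v w * fst (snd y) + h3 * D) / s"
    using s unfolding h1_def h2_def D_def s_def[symmetric] by (simp add: field_simps)
  also have "h3 * D = s * snd (snd y) - Zu u w * fst y - Zv v w * fst (snd y)"
    using D by (simp add: h3_def)
  also have "(Zu u w * fst y + Zv v w * fst (snd y) + (s * snd (snd y) - Zu u w * fst y - Zv v w * fst (snd y))) / s
     = snd (snd y)" using s by simp
  finally have e3: "Zu u w * h1 + Zv v w * h2 + Zw u v w * h3 = snd (snd y)" .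
  show "J (u,v,w) (h1, h2, h3) = y" using e1 e2 e3 by (simp add: J_def s_def prod_eq_iff)
qed

lemma J_notsurj:
  assumes "sg w = 0"
  shows "\<not> surj (J (u,v,w))"
proof
  assume su: "surj (J (u,v,w))"
  show False
  proof (cases "Yw v w = 0")
    case True
    obtain h where "J (u,v,w) h = (0,1,0)" using su by (metis surjD)
    then show False using True assms by (simp add: J_def)
  next
    case False
    obtain h where h: "J (u,v,w) h = (1,0,0)" using su by (metis surjD)
    then have "Yw v w * snd (snd h) = 0" "Xw u w * snd (snd h) = 1" using assms by (simp_all add: J_def)
    then show False using False by simp
  qed
qed

lemma tcon_Psi:
  assumes ab: "(a,b) \<in> Aset"
  shows "t_con (x0,y0,z0) (Psi (a,b)) = pi / wA a b"
proof -
  note f = A_facts[OF ab]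
  obtain u0 v0 w0 where l: "Psi (a,b) = (u0,v0,w0)" by (cases "Psi (a,b)") auto
  have w0: "w0 = wA a b" "w0 > 0" using l f by (auto simp: Psi_def)
  have L0: "x0 * u0 + y0 * v0 > 0" using Psi_props(2)[OF ab] Psi_props(4)[OF ab] l
    by (simp add: Lof_eq Sset_def)
  have sc: "t *\<^sub>R Psi (a,b) = (t * u0, t * v0, t * w0)" for t by (simp add: l)
  have crit: "exp_critical (x0,y0,z0) (t *\<^sub>R Psi (a,b)) \<longleftrightarrow> \<not> surj (J (t * u0, t * v0, t * w0))"
    if "t > 0" for t
    unfolding sc using that w0 by (intro crit_iff) simp
  define T where "T = pi / w0"
  have T: "T > 0" using w0 by (simp add: T_def)
  have inS: "T \<in> {t. t > 0 \<and> exp_critical (x0,y0,z0) (t *\<^sub>R Psi (a,b))}"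
  proof -
    have "T * w0 = pi" using w0 by (simp add: T_def)
    then have "sg (T * w0) = 0" by (simp add: sg_def)
    then show ?thesis using crit[OF T] T J_notsurj by auto
  qed
  have lb: "T \<le> t" if "t \<in> {t. t > 0 \<and> exp_critical (x0,y0,z0) (t *\<^sub>R Psi (a,b))}" for t
  proof (rule ccontr)
    assume "\<not> T \<le> t"
    then have tT: "t < T" by simp
    have t0: "t > 0" and cr: "exp_critical (x0,y0,z0) (t *\<^sub>R Psi (a,b))" using that by auto
    define w where "w = t * w0"
    have w: "0 < w" "w < pi" using t0 tT w0 by (simp_all add: w_def T_def field_simps)
    have sn: "sin w > 0" using w by (intro sin_gt_zero) auto
    have sg: "sg w > 0" using sn w by (simp add: sg_def)
    have d1: "(rr + x0 * (t * u0) + y0 * (t * v0)) * sin w / w > 0"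
    proof -
      have "x0 * (t * u0) + y0 * (t * v0) = t * (x0 * u0 + y0 * v0)" by (simp add: algebra_simps)
      moreover have "t * (x0 * u0 + y0 * v0) > 0" using t0 L0 by simp
      ultimately have "rr + x0 * (t * u0) + y0 * (t * v0) > 0" using rr_pos by linarith
      then show ?thesis using sn w by simp
    qed
    have d2: "((t * u0)^2 + (t * v0)^2) * (sin w - w * cos w) / w^3 \<ge> 0"
      using tcos_lt_sin[of w] w by (simp add: mult.commute)
    have eqD: "sg w * Zw (t * u0) (t * v0) w - Xw (t * u0) w * Zu (t * u0) w - Yw (t * v0) w * Zv (t * v0) w
       = (rr + x0 * (t * u0) + y0 * (t * v0)) * sin w / w + ((t * u0)^2 + (t * v0)^2) * (sin w - w * cos w) / w^3"
      by (rule Dval) (use w in simp)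
    have "sg w * Zw (t * u0) (t * v0) w - Xw (t * u0) w * Zu (t * u0) w - Yw (t * v0) w * Zv (t * v0) w > 0"
      unfolding eqD using d1 d2 by linarith
    then have "surj (J (t * u0, t * v0, w))" using sg by (intro J_surj) auto
    then show False using cr crit[OF t0] by (simp add: w_def)
  qed
  have "Inf {t. t > 0 \<and> exp_critical (x0,y0,z0) (t *\<^sub>R Psi (a,b))} = T"
    by (rule cInf_eq_minimum[OF inS lb])
  then show ?thesis by (simp add: t_con_def T_def w0)
qed

end

theorem lemma11:
  fixes x0 y0 z0 :: real
  assumes "x0^2 + y0^2 > 0"
  defines "q0 \<equiv> (x0, y0, z0)"
      and "r0 \<equiv> sqrt (x0^2 + y0^2)"
      and "S \<equiv> {l \<in> E1 (x0, y0, z0). Kof (x0, y0, z0) l > 0 \<and> Lof (x0, y0, z0) l > 0 \<and> wof l > 0}"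
      and "A \<equiv> {0<..<sqrt (x0^2 + y0^2)} \<times> {sqrt (x0^2 + y0^2)<..}"
      and "\<Phi> \<equiv> (\<lambda>l. (rmin (x0, y0, z0) l, rmax (x0, y0, z0) l))"
  shows
    "(\<forall>l\<in>S. let a = rmin q0 l; b = rmax q0 l; w0 = wof l; \<phi> = phase r0 a b;
              r = (\<lambda>t. cyl_r (normal_traj q0 l t)) in
        0 < a \<and> a < r0 \<and> r0 < b \<and>
        w0 = 1 / sqrt (a^2 + b^2) \<and> Kof q0 l = a * b / sqrt (a^2 + b^2) \<and>
        (\<forall>T. \<exists>t>T. r t = a) \<and> (\<forall>T. \<exists>t>T. r t = b) \<and>
        0 < \<phi> \<and> \<phi> < pi / 2 \<and> r0^2 = a^2 + (b^2 - a^2) * (sin \<phi>)^2 \<and>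
        (\<forall>t. (r t)^2 = a^2 + (b^2 - a^2) * (sin (w0 * t + \<phi>))^2) \<and>
        t_con q0 l = pi / w0)
     \<and> bij_betw \<Phi> S A
     \<and> continuous_on S \<Phi>
     \<and> (\<exists>\<Psi>'. (\<forall>p\<in>A. (inv_into S \<Phi> has_derivative \<Psi>' p) (at p) \<and> inj (\<Psi>' p))
             \<and> continuous_on A (\<lambda>p. \<Psi>' p (1, 0)) \<and> continuous_on A (\<lambda>p. \<Psi>' p (0, 1)))
     \<and> (\<exists>\<Theta>. angle_lift q0 (inv_into S \<Phi>) A \<Theta>)
     \<and> (\<forall>\<Theta>. angle_lift q0 (inv_into S \<Phi>) A \<Theta> \<longrightarrow>
          (\<forall>a b t. (a, b) \<in> A \<longrightarrow>
             (let R = (\<lambda>a' b'. cyl_r (normal_traj q0 (inv_into S \<Phi> (a', b')) t)) in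
              \<exists>Ra Rb Ta Tb.
                ((\<lambda>a'. R a' b) has_real_derivative Ra) (at a) \<and>
                ((\<lambda>b'. R a b') has_real_derivative Rb) (at b) \<and>
                ((\<lambda>a'. \<Theta> t a' b) has_real_derivative Ta) (at a) \<and>
                ((\<lambda>b'. \<Theta> t a b') has_real_derivative Tb) (at b) \<and>
                Ra * Tb - Rb * Ta = Dexpr r0 a b t (R a b))))
     \<and> (\<forall>a b. (a, b) \<in> A \<longrightarrow>
          (let w0 = 1 / sqrt (a^2 + b^2);
               D = (\<lambda>t. Dexpr r0 a b t (cyl_r (normal_traj q0 (inv_into S \<Phi> (a, b)) t))) in
           D (pi / w0) = 0 \<and> (\<forall>t. 0 < t \<and> t < pi / w0 \<longrightarrow> D t \<noteq> 0)))"
proof -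
  interpret ctx x0 y0 z0 by unfold_locales (rule assms(1))
  have S_eq: "S = Sset" unfolding S_def Sset_def ..
  have A_eq: "A = Aset" unfolding A_def Aset_def rr_def ..
  have Phi_eq: "\<Phi> = Phi" unfolding \<Phi>_def Phi_def ..
  have r0_eq: "r0 = sqrt rr" unfolding r0_def rr_def ..
  have openA: "open Aset" unfolding Aset_def by (intro open_Times) auto
  have P1: "\<forall>l\<in>Sset. let a = rmin (x0,y0,z0) l; b = rmax (x0,y0,z0) l; w0 = wof l; \<phi> = phase (sqrt rr) a b;
              r = (\<lambda>t. cyl_r (normal_traj (x0,y0,z0) l t)) in
        0 < a \<and> a < sqrt rr \<and> sqrt rr < b \<and>
        w0 = 1 / sqrt (a^2 + b^2) \<and> Kof (x0,y0,z0) l = a * b / sqrt (a^2 + b^2) \<and>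
        (\<forall>T. \<exists>t>T. r t = a) \<and> (\<forall>T. \<exists>t>T. r t = b) \<and>
        0 < \<phi> \<and> \<phi> < pi / 2 \<and> (sqrt rr)^2 = a^2 + (b^2 - a^2) * (sin \<phi>)^2 \<and>
        (\<forall>t. (r t)^2 = a^2 + (b^2 - a^2) * (sin (w0 * t + \<phi>))^2) \<and>
        t_con (x0,y0,z0) l = pi / w0"
  proof
    fix l assume l: "l \<in> Sset"
    obtain a b where ab: "Phi l = (a,b)" by (cases "Phi l") auto
    have abA: "(a,b) \<in> Aset" using Phi_in[OF l] ab by simp
    have lP: "l = Psi (a,b)" using Psi_Phi[OF l] ab by simp
    have rmn: "rmin (x0,y0,z0) l = a" and rmx: "rmax (x0,y0,z0) l = b"
      using rmin_Psi[OF abA] rmax_Psi[OF abA] lP by simp_all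
    note f = A_facts[OF abA] and p = ph_facts[OF abA]
    have ab': "0 < a" "a < sqrt rr" "sqrt rr < b" using abA by (auto simp: Aset_def)
    have wl: "wof l = 1 / sqrt (a^2 + b^2)" using Psi_props(3)[OF abA] lP by (simp add: wA_def)
    have Kl: "Kof (x0,y0,z0) l = a * b / sqrt (a^2 + b^2)" using Psi_props(1)[OF abA] lP by (simp add: KA_def wA_def)
    have wl': "wof l = wA a b" using Psi_props(3)[OF abA] lP by simp
    show "let a = rmin (x0,y0,z0) l; b = rmax (x0,y0,z0) l; w0 = wof l; \<phi> = phase (sqrt rr) a b;
              r = (\<lambda>t. cyl_r (normal_traj (x0,y0,z0) l t)) in
        0 < a \<and> a < sqrt rr \<and> sqrt rr < b \<and>
        w0 = 1 / sqrt (a^2 + b^2) \<and> Kof (x0,y0,z0) l = a * b / sqrt (a^2 + b^2) \<and>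
        (\<forall>T. \<exists>t>T. r t = a) \<and> (\<forall>T. \<exists>t>T. r t = b) \<and>
        0 < \<phi> \<and> \<phi> < pi / 2 \<and> (sqrt rr)^2 = a^2 + (b^2 - a^2) * (sin \<phi>)^2 \<and>
        (\<forall>t. (r t)^2 = a^2 + (b^2 - a^2) * (sin (w0 * t + \<phi>))^2) \<and>
        t_con (x0,y0,z0) l = pi / w0"
      unfolding Let_def rmn rmx phase_eq[OF abA]
      using ab' wl Kl osc[OF abA] p rr_pos R_bounds(3)[OF abA] tcon_Psi[OF abA] wl' lP
      by auto
  qed
  have P4: "\<exists>\<Psi>'. (\<forall>p\<in>Aset. (inv_into Sset Phi has_derivative \<Psi>' p) (at p) \<and> inj (\<Psi>' p))
             \<and> continuous_on Aset (\<lambda>p. \<Psi>' p (1, 0)) \<and> continuous_on Aset (\<lambda>p. \<Psi>' p (0, 1))"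
  proof (intro exI[of _ Psi'] conjI ballI cont_Psi')
    fix p assume p: "p \<in> Aset"
    show "(inv_into Sset Phi has_derivative Psi' p) (at p)"
      by (rule has_derivative_transform_within_open[OF d_Psi[OF p] openA p]) (simp add: inv_eq)
    show "inj (Psi' p)" by (rule inj_Psi'[OF p])
  qed
  have P6: "\<forall>\<Theta>. angle_lift (x0,y0,z0) (inv_into Sset Phi) Aset \<Theta> \<longrightarrow>
          (\<forall>a b t. (a, b) \<in> Aset \<longrightarrow>
             (let R = (\<lambda>a' b'. cyl_r (normal_traj (x0,y0,z0) (inv_into Sset Phi (a', b')) t)) in
              \<exists>Ra Rb Ta Tb.
                ((\<lambda>a'. R a' b) has_real_derivative Ra) (at a) \<and>
                ((\<lambda>b'. R a b') has_real_derivative Rb) (at b) \<and>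
                ((\<lambda>a'. \<Theta> t a' b) has_real_derivative Ta) (at a) \<and>
                ((\<lambda>b'. \<Theta> t a b') has_real_derivative Tb) (at b) \<and>
                Ra * Tb - Rb * Ta = Dexpr (sqrt rr) a b t (R a b)))"
    unfolding Let_def using D_formula by blast
  have P7: "\<forall>a b. (a, b) \<in> Aset \<longrightarrow>
          (let w0 = 1 / sqrt (a^2 + b^2);
               D = (\<lambda>t. Dexpr (sqrt rr) a b t (cyl_r (normal_traj (x0,y0,z0) (inv_into Sset Phi (a, b)) t))) in
           D (pi / w0) = 0 \<and> (\<forall>t. 0 < t \<and> t < pi / w0 \<longrightarrow> D t \<noteq> 0))"
  proof (intro allI impI)
    fix a b assume abA: "(a,b) \<in> Aset"
    have w0: "1 / sqrt (a^2 + b^2) = wA a b" by (simp add: wA_def)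
    have Rpos: "cyl_r (normal_traj (x0,y0,z0) (inv_into Sset Phi (a, b)) t) > 0" for t
      unfolding R_A[OF abA] using XY_pos[OF abA] by simp
    show "let w0 = 1 / sqrt (a^2 + b^2);
               D = (\<lambda>t. Dexpr (sqrt rr) a b t (cyl_r (normal_traj (x0,y0,z0) (inv_into Sset Phi (a, b)) t))) in
           D (pi / w0) = 0 \<and> (\<forall>t. 0 < t \<and> t < pi / w0 \<longrightarrow> D t \<noteq> 0)"
      unfolding Let_def w0 bracket_eq[OF abA]
      using EE_zero[OF abA] EE_neg[OF abA] Rpos by (auto; metis less_irrefl)
  qed
  show ?thesis
    unfolding S_eq A_eq Phi_eq r0_eq q0_def
    using P1 bij cont_Phi P4 theta_exists P6 P7 by blast
qed


end
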